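(* Let $K\ge1$ be fixed, let $\boldsymbol{\beta}_0\in\mathbb{R}^K$, and for each $n$ let $\mathbf{x}_1,\dots,\mathbf{x}_n\in\mathbb{R}^K$ (rows of the $n\times K$ design matrix $\mathbf{X}$) satisfy: (i) $\sum_{i=1}^n x_{i,k}=0$ and $\sum_{i=1}^n x_{i,k}^2=n$ for each $k$; (ii) $\max_{1\le i\le n}\|\mathbf{x}_i\|/\sqrt n\to0$; (iii) $\mathbf{X}^t\mathbf{X}$ is positive definite; (iv) $\mathbf{X}^t\mathbf{X}/n\to\boldsymbol{\Sigma}_0$ with $\boldsymbol{\Sigma}_0$ positive definite. Suppose the data follow $Y_{ni}=\mathbf{x}_i^t\boldsymbol{\beta}_n+\varepsilon_{ni}$, $i=1,\dots,n$, with $\boldsymbol{\beta}_n=\boldsymbol{\beta}_0/\sqrt n$, where for each $n$ the $\varepsilon_{n1},\dots,\varepsilon_{nn}$ are independent with $\mathbb{E}(\varepsilon_{ni})=0$, $\mathbb{E}(\varepsilon_{ni}^2)=1$ and $\mathbb{E}(\varepsilon_{ni}^4)\le M$ for some $M<\infty$. Let $Y_{ni}^*=\sqrt n\,Y_{ni}$, $\mathbf{Y}_n^*=(Y_{n1}^*,\dots,Y_{nn}^* )^t$, and consider the Bayesian model $(Y_{ni}^*\mid\mathbf{x}_i,\boldsymbol{\beta})$ independent $N(\mathbf{x}_i^t\boldsymbol{\beta},n)$, $(\boldsymbol{\beta}\mid\boldsymbol{\gamma})\sim\nu(d\boldsymbol{\beta}\mid\boldsymbol{\gamma})$, $\boldsymbol{\gamma}\sim\pi$,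 and suppose the marginal prior $\nu$ of $\boldsymbol{\beta}$ has a density $f$ that is continuous and positive everywhere. Let $\nu_n(\cdot\mid\mathbf{Y}_n^* )$ be the posterior of $\boldsymbol{\beta}$. Then for each $\boldsymbol{\beta}_1\in\mathbb{R}^K$ and each $C>0$, $$\log\left(\frac{\nu_n(S(\boldsymbol{\beta}_1,C/\sqrt n)\mid\mathbf{Y}_n^* )}{\nu_n(S(\boldsymbol{\beta}_0,C/\sqrt n)\mid\mathbf{Y}_n^* )}\right)\rightsquigarrow \log\left(\frac{f(\boldsymbol{\beta}_1)}{f(\boldsymbol{\beta}_0)}\right)-\frac12(\boldsymbol{\beta}_1-\boldsymbol{\beta}_0)^t\boldsymbol{\Sigma}_0(\boldsymbol{\beta}_1-\boldsymbol{\beta}_0)+(\boldsymbol{\beta}_1-\boldsymbol{\beta}_0)^t\mathbf{Z}$$ in distribution, where $\mathbf{Z}\sim N(\mathbf{0},\boldsymbol{\Sigma}_0)$.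
   Context: $S(\boldsymbol{\beta},r)$ denotes the (Euclidean) ball in $\mathbb{R}^K$ centered at $\boldsymbol{\beta}$ with radius $r>0$. $\|\cdot\|$ is the Euclidean norm. $\rightsquigarrow$ denotes convergence in distribution as $n\to\infty$. *)

theory Defs
  imports "HOL-Probability.Probability"
begin

definition pos_def_mat :: "real^'k^'k \<Rightarrow> bool" where
  "pos_def_mat A \<longleftrightarrow> transpose A = A \<and> (\<forall>v. v \<noteq> 0 \<longrightarrow> v \<bullet> (A *v v) > 0)"

text \<open>X^t X for the design with rows x 0, ..., x (n-1).\<close>
definition gram :: "(nat \<Rightarrow> real^'k) \<Rightarrow> nat \<Rightarrow> real^'k^'k" where
  "gram x n = (\<chi> j l. \<Sum>i<n. x i $ j * x i $ l)"

definition gauss_law :: "real \<Rightarrow> real \<Rightarrow> real measure" where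
  "gauss_law m v = (if v = 0 then return borel m
                    else density lborel (\<lambda>t. ennreal (normal_density m (sqrt v) t)))"

definition mvnormal :: "'a measure \<Rightarrow> ('a \<Rightarrow> real^'k) \<Rightarrow> real^'k^'k \<Rightarrow> bool" where
  "mvnormal Q Z S \<longleftrightarrow> prob_space Q \<and> Z \<in> borel_measurable Q \<and>
     (\<forall>a. distr Q borel (\<lambda>w. a \<bullet> Z w) = gauss_law 0 (a \<bullet> (S *v a)))"

definition lik :: "(nat \<Rightarrow> real^'k) \<Rightarrow> nat \<Rightarrow> (nat \<Rightarrow> real) \<Rightarrow> real^'k \<Rightarrow> real" where
  "lik x n y b = (\<Prod>i<n. normal_density (x i \<bullet> b) (sqrt (real n)) (y i))"

definition posterior :: "(real^'k \<Rightarrow> real) \<Rightarrow> (nat \<Rightarrow> real^'k) \<Rightarrow> nat \<Rightarrow> (nat \<Rightarrow> real)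
    \<Rightarrow> (real^'k) set \<Rightarrow> real" where
  "posterior f x n y A =
     (\<integral>b. indicator A b * f b * lik x n y b \<partial>lborel) / (\<integral>b. f b * lik x n y b \<partial>lborel)"

end

theory Submission
  imports Defs
begin


lemma exp_neg_approx:
  fixes a :: real assumes "0 \<le> a"
  shows "\<bar>exp (-a) - (1 - a)\<bar> \<le> a^2"
proof -
  have lo: "1 - a \<le> exp (-a)" using exp_ge_add_one_self[of "-a"] by simp
  have "exp (-a) = 1 / exp a" by (simp add: exp_minus field_simps)
  also have "\<dots> \<le> 1 / (1 + a)" using assms exp_ge_add_one_self[of a]
    by (intro divide_left_mono) auto
  also have "\<dots> \<le> 1 - a + a^2"
  proof -
    have "1 \<le> (1 - a + a^2) * (1 + a)" using assms
      by (simp add: algebra_simps power2_eq_square power3_eq_cube)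
    then show ?thesis using assms by (simp add: field_simps)
  qed
  finally show ?thesis using lo by simp
qed

lemma cmod_one_minus_real: "0 \<le> a \<Longrightarrow> a \<le> 1 \<Longrightarrow> cmod (1 - complex_of_real a) \<le> 1"
proof -
  assume "0 \<le> a" "a \<le> 1"
  have "1 - complex_of_real a = complex_of_real (1 - a)" by simp
  then show ?thesis using \<open>0 \<le> a\<close> \<open>a \<le> 1\<close> by (simp only: norm_of_real)
qed

lemma prod_clt:
  fixes \<phi> :: "nat \<Rightarrow> nat \<Rightarrow> complex" and a :: "nat \<Rightarrow> nat \<Rightarrow> real"
  assumes phi1: "\<And>n i. i < n \<Longrightarrow> cmod (\<phi> n i) \<le> 1"
    and apos: "\<And>n i. i < n \<Longrightarrow> 0 \<le> a n i"
    and asum: "(\<lambda>n. \<Sum>i<n. a n i) \<longlonglongrightarrow> \<alpha>"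
    and amax: "\<And>e. e > 0 \<Longrightarrow> \<forall>\<^sub>F n in sequentially. \<forall>i<n. a n i \<le> e"
    and err: "(\<lambda>n. \<Sum>i<n. cmod (\<phi> n i - (1 - a n i))) \<longlonglongrightarrow> 0"
  shows "(\<lambda>n. \<Prod>i<n. \<phi> n i) \<longlonglongrightarrow> complex_of_real (exp (- \<alpha>))"
proof -
  have ev1: "\<forall>\<^sub>F n in sequentially. \<forall>i<n. a n i \<le> 1" using amax[of 1] by simp
  have A: "(\<lambda>n. (\<Prod>i<n. \<phi> n i) - (\<Prod>i<n. complex_of_real (1 - a n i))) \<longlonglongrightarrow> 0"
  proof (rule Lim_null_comparison[OF _ err])
    show "\<forall>\<^sub>F n in sequentially. norm ((\<Prod>i<n. \<phi> n i) - (\<Prod>i<n. complex_of_real (1 - a n i)))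
       \<le> (\<Sum>i<n. cmod (\<phi> n i - (1 - a n i)))"
      using ev1
    proof eventually_elim
      case (elim n)
      show ?case
        by (rule order_trans[OF norm_prod_diff]) (use elim phi1 apos in \<open>auto intro!: cmod_one_minus_real\<close>)
    qed
  qed
  have sq: "(\<lambda>n. \<Sum>i<n. (a n i)^2) \<longlonglongrightarrow> 0"
  proof (rule LIMSEQ_I)
    fix r :: real assume r: "r > 0"
    define e where "e = r / (\<bar>\<alpha>\<bar> + 2)"
    have e: "e > 0" using r by (simp add: e_def add_pos_nonneg)
    have "\<forall>\<^sub>F n in sequentially. (\<Sum>i<n. a n i) < \<alpha> + 1"
      using asum by (rule order_tendstoD) simp
    moreover have "\<forall>\<^sub>F n in sequentially. \<forall>i<n. a n i \<le> e" using amax[OF e] .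
    ultimately have "\<forall>\<^sub>F n in sequentially. norm (\<Sum>i<n. (a n i)^2) < r"
    proof eventually_elim
      case (elim n)
      have "norm (\<Sum>i<n. (a n i)^2) = (\<Sum>i<n. (a n i)^2)"
        by (simp add: sum_nonneg)
      also have "\<dots> \<le> (\<Sum>i<n. e * a n i)"
        using elim apos by (intro sum_mono) (auto simp: power2_eq_square intro!: mult_right_mono)
      also have "\<dots> = e * (\<Sum>i<n. a n i)" by (simp add: sum_distrib_left)
      also have "\<dots> \<le> e * (\<bar>\<alpha>\<bar> + 1)" using elim e by (intro mult_left_mono) auto
      also have "\<dots> < r" using r e by (simp add: e_def field_simps)
      finally show ?case .
    qed
    then show "\<exists>no. \<forall>n\<ge>no. norm ((\<Sum>i<n. (a n i)^2) - 0) < r"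
      by (simp add: eventually_sequentially)
  qed
  have B: "(\<lambda>n. (\<Prod>i<n. complex_of_real (1 - a n i)) - complex_of_real (exp (- (\<Sum>i<n. a n i)))) \<longlonglongrightarrow> 0"
  proof (rule Lim_null_comparison[OF _ sq])
    show "\<forall>\<^sub>F n in sequentially. norm ((\<Prod>i<n. complex_of_real (1 - a n i)) - complex_of_real (exp (- (\<Sum>i<n. a n i))))
       \<le> (\<Sum>i<n. (a n i)^2)"
      using ev1
    proof eventually_elim
      case (elim n)
      have "complex_of_real (exp (- (\<Sum>i<n. a n i))) = (\<Prod>i<n. complex_of_real (exp (- a n i)))"
        by (simp add: exp_sum[symmetric] sum_negf[symmetric] del: of_real_prod flip: of_real_prod)
      then have "norm ((\<Prod>i<n. complex_of_real (1 - a n i)) - complex_of_real (exp (- (\<Sum>i<n. a n i))))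
          = norm ((\<Prod>i<n. complex_of_real (1 - a n i)) - (\<Prod>i<n. complex_of_real (exp (- a n i))))" by simp
      also have "\<dots> \<le> (\<Sum>i<n. norm (complex_of_real (1 - a n i) - complex_of_real (exp (- a n i))))"
        by (rule norm_prod_diff) (use elim apos in \<open>auto intro!: cmod_one_minus_real\<close>)
      also have "\<dots> \<le> (\<Sum>i<n. (a n i)^2)"
      proof (intro sum_mono)
        fix i assume "i \<in> {..<n}"
        then have "\<bar>exp (- a n i) - (1 - a n i)\<bar> \<le> (a n i)^2" using apos exp_neg_approx by auto
        then show "norm (complex_of_real (1 - a n i) - complex_of_real (exp (- a n i))) \<le> (a n i)^2"
          by (simp only: of_real_diff[symmetric] norm_of_real)
      qed
      finally show ?case .
    qed
  qed
  have C: "(\<lambda>n. complex_of_real (exp (- (\<Sum>i<n. a n i)))) \<longlonglongrightarrow> complex_of_real (exp (- \<alpha>))"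
    by (intro tendsto_intros asum)
  have "(\<lambda>n. ((\<Prod>i<n. \<phi> n i) - (\<Prod>i<n. complex_of_real (1 - a n i))) +
     ((\<Prod>i<n. complex_of_real (1 - a n i)) - complex_of_real (exp (- (\<Sum>i<n. a n i))))
     + complex_of_real (exp (- (\<Sum>i<n. a n i)))) \<longlonglongrightarrow> 0 + 0 + complex_of_real (exp (- \<alpha>))"
    by (intro tendsto_add A B C)
  then show ?thesis by simp
qed


lemma abs_le_1_sq: "\<bar>y::real\<bar> \<le> 1 + y^2"
proof (cases "\<bar>y\<bar> \<le> 1")
  case False
  then have "\<bar>y\<bar> * 1 \<le> \<bar>y\<bar> * \<bar>y\<bar>" by (intro mult_left_mono) auto
  then show ?thesis by (simp add: power2_eq_square)
qed (simp add: add_increasing2)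

lemma abs3_le: "\<bar>y::real\<bar>^3 \<le> y^2 + y^4"
proof -
  have "\<bar>y\<bar>^3 = y^2 * \<bar>y\<bar>" by (simp add: power2_eq_square power3_eq_cube)
  also have "\<dots> \<le> y^2 * (1 + y^2)" by (intro mult_left_mono abs_le_1_sq) auto
  also have "\<dots> = y^2 + y^4" by (simp add: algebra_simps power2_eq_square power4_eq_xxxx)
  finally show ?thesis .
qed

lemma (in prob_space) char_bound4:
  fixes X :: "'a \<Rightarrow> real"
  assumes X[measurable]: "random_variable borel X" and m0: "expectation X = 0"
    and v1: "expectation (\<lambda>w. (X w)^2) = 1"
    and i4: "integrable M (\<lambda>w. (X w)^4)" and b4: "expectation (\<lambda>w. (X w)^4) \<le> B"
  shows "cmod (char (distr M borel X) s - (1 - s^2/2)) \<le> \<bar>s\<bar>^3 * (1 + B)"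
proof -
  have i2: "integrable M (\<lambda>w. (X w)^2)"
    using v1 not_integrable_integral_eq by fastforce
  have i1: "integrable M X"
    by (rule Bochner_Integration.integrable_bound[of _ "\<lambda>w. 1 + (X w)^2"])
       (use i2 abs_le_1_sq in \<open>auto intro!: AE_I2\<close>)
  have i3: "integrable M (\<lambda>w. \<bar>X w\<bar>^3)"
    by (rule Bochner_Integration.integrable_bound[of _ "\<lambda>w. (X w)^2 + (X w)^4"])
       (use i2 i4 abs3_le in \<open>auto intro!: AE_I2 Bochner_Integration.integrable_add\<close>)
  have var: "variance X = 1" using m0 v1 by simp
  have ca: "cmod (char (distr M borel X) s - (1 - s^2 * 1 / 2)) \<le>
     (s^2/6) * expectation (\<lambda>x. min (6 * (X x)^2) (\<bar>s\<bar> * \<bar>X x\<bar>^3))"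
    by (rule char_approx3'[OF X i1 i2 m0 var refl])
  have "expectation (\<lambda>x. \<bar>X x\<bar>^3) \<le> expectation (\<lambda>x. (X x)^2 + (X x)^4)"
    by (intro integral_mono i3 Bochner_Integration.integrable_add i2 i4 abs3_le)
  also have "\<dots> = 1 + expectation (\<lambda>x. (X x)^4)" using i2 i4 v1 by simp
  also have "\<dots> \<le> 1 + B" using b4 by simp
  finally have E3: "expectation (\<lambda>x. \<bar>X x\<bar>^3) \<le> 1 + B" .
  have "expectation (\<lambda>x. min (6 * (X x)^2) (\<bar>s\<bar> * \<bar>X x\<bar>^3)) \<le> expectation (\<lambda>x. \<bar>s\<bar> * \<bar>X x\<bar>^3)"
    by (intro integral_mono integrable_min Bochner_Integration.integrable_mult_right i2 i3) auto
  also have "\<dots> = \<bar>s\<bar> * expectation (\<lambda>x. \<bar>X x\<bar>^3)" by simp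
  also have "\<dots> \<le> \<bar>s\<bar> * (1 + B)" using E3 by (intro mult_left_mono) auto
  finally have e3: "expectation (\<lambda>x. min (6 * (X x)^2) (\<bar>s\<bar> * \<bar>X x\<bar>^3)) \<le> \<bar>s\<bar> * (1 + B)" .
  have "cmod (char (distr M borel X) s - (1 - s^2/2)) \<le> (s^2/6) * (\<bar>s\<bar> * (1 + B))"
    using ca mult_left_mono[OF e3, of "s^2/6"] by simp
  also have "\<dots> \<le> \<bar>s\<bar>^3 * (1 + B)"
  proof -
    have "0 \<le> expectation (\<lambda>x. (X x)^4)" by (intro integral_nonneg_AE) auto
    then have B0: "0 \<le> 1 + B" using b4 by linarith
    have "(s^2/6) * (\<bar>s\<bar> * (1 + B)) = (\<bar>s\<bar>^3 * (1 + B)) / 6"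
      by (simp add: power2_eq_square power3_eq_cube abs_mult_self_eq)
    also have "\<dots> \<le> \<bar>s\<bar>^3 * (1 + B)" using B0 by simp
    finally show ?thesis .
  qed
  finally show ?thesis .
qed


lemma sum_small:
  fixes b g :: "nat \<Rightarrow> nat \<Rightarrow> real"
  assumes bpos: "\<And>n i. i < n \<Longrightarrow> 0 \<le> b n i"
    and bsum: "(\<lambda>n. \<Sum>i<n. b n i) \<longlonglongrightarrow> \<beta>"
    and gmax: "\<And>e. e > 0 \<Longrightarrow> \<forall>\<^sub>F n in sequentially. \<forall>i<n. \<bar>g n i\<bar> \<le> e"
  shows "(\<lambda>n. \<Sum>i<n. \<bar>g n i\<bar> * b n i) \<longlonglongrightarrow> 0"
proof (rule LIMSEQ_I)
  fix r :: real assume r: "r > 0"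
  define e where "e = r / (\<bar>\<beta>\<bar> + 2)"
  have e: "e > 0" using r by (simp add: e_def add_pos_nonneg)
  have "\<forall>\<^sub>F n in sequentially. (\<Sum>i<n. b n i) < \<beta> + 1"
    using bsum by (rule order_tendstoD) simp
  moreover have "\<forall>\<^sub>F n in sequentially. \<forall>i<n. \<bar>g n i\<bar> \<le> e" using gmax[OF e] .
  ultimately have "\<forall>\<^sub>F n in sequentially. norm ((\<Sum>i<n. \<bar>g n i\<bar> * b n i) - 0) < r"
  proof eventually_elim
    case (elim n)
    have "norm ((\<Sum>i<n. \<bar>g n i\<bar> * b n i) - 0) = (\<Sum>i<n. \<bar>g n i\<bar> * b n i)"
    proof -
      have "0 \<le> (\<Sum>i<n. \<bar>g n i\<bar> * b n i)" by (intro sum_nonneg) (use bpos in auto)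
      then show ?thesis by simp
    qed
    also have "\<dots> \<le> (\<Sum>i<n. e * b n i)"
      using elim bpos by (intro sum_mono) (auto intro!: mult_right_mono)
    also have "\<dots> = e * (\<Sum>i<n. b n i)" by (simp add: sum_distrib_left)
    also have "\<dots> \<le> e * (\<bar>\<beta>\<bar> + 1)" using elim e by (intro mult_left_mono) auto
    also have "\<dots> < r" using r e by (simp add: e_def field_simps)
    finally show ?case .
  qed
  then show "\<exists>no. \<forall>n\<ge>no. norm ((\<Sum>i<n. \<bar>g n i\<bar> * b n i) - 0) < r"
    by (simp add: eventually_sequentially)
qed

lemma cube_aux: "\<bar>c * t\<bar>^3 * (1 + B) = (\<bar>t\<bar>^3 * (1 + B)) * (\<bar>c\<bar> * c^2)" for c t B :: real
proof -
  have "\<bar>c\<bar>^3 = \<bar>c\<bar> * c^2" by (simp add: power3_eq_cube power2_eq_square abs_mult_self_eq)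
  then show ?thesis by (simp add: abs_mult power_mult_distrib)
qed

lemma weighted_clt:
  fixes P :: "nat \<Rightarrow> 'a measure" and eps :: "nat \<Rightarrow> nat \<Rightarrow> 'a \<Rightarrow> real"
    and c :: "nat \<Rightarrow> nat \<Rightarrow> real"
  assumes prob: "\<And>n. prob_space (P n)"
    and indep: "\<And>n. prob_space.indep_vars (P n) (\<lambda>_. borel) (eps n) {..<n}"
    and mean0: "\<And>n i. i < n \<Longrightarrow> prob_space.expectation (P n) (eps n i) = 0"
    and var1: "\<And>n i. i < n \<Longrightarrow> prob_space.expectation (P n) (\<lambda>w. (eps n i w)^2) = 1"
    and int4: "\<And>n i. i < n \<Longrightarrow> integrable (P n) (\<lambda>w. (eps n i w)^4)"
    and mom4: "\<And>n i. i < n \<Longrightarrow> prob_space.expectation (P n) (\<lambda>w. (eps n i w)^4) \<le> B"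
    and csum: "(\<lambda>n. \<Sum>i<n. (c n i)^2) \<longlonglongrightarrow> v"
    and cmax: "\<And>e. e > 0 \<Longrightarrow> \<forall>\<^sub>F n in sequentially. \<forall>i<n. \<bar>c n i\<bar> \<le> e"
  shows "(\<lambda>n. \<Prod>i<n. char (distr (P n) borel (eps n i)) (c n i * t))
           \<longlonglongrightarrow> complex_of_real (exp (- (v * t^2 / 2)))"
proof (rule prod_clt)
  have rv: "eps n i \<in> borel_measurable (P n)" if "i < n" for n i
    using indep[of n] that prob[of n] by (auto simp: prob_space.indep_vars_def)
  show "cmod (char (distr (P n) borel (eps n i)) (c n i * t)) \<le> 1" if "i < n" for n i
    by (rule real_distribution.cmod_char_le_1)
       (simp add: prob_space.real_distribution_distr prob rv that)
  show "0 \<le> (c n i * t)^2 / 2" for n i by simp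
  show "(\<lambda>n. \<Sum>i<n. (c n i * t)^2 / 2) \<longlonglongrightarrow> v * t^2 / 2"
  proof -
    have "(\<lambda>n. (\<Sum>i<n. (c n i)^2) * (t^2/2)) \<longlonglongrightarrow> v * (t^2 / 2)"
      by (intro tendsto_intros csum)
    moreover have "(\<Sum>i<n. (c n i)^2) * (t^2/2) = (\<Sum>i<n. (c n i * t)^2 / 2)" for n
      by (simp add: sum_distrib_right power_mult_distrib)
    ultimately show ?thesis by simp
  qed
  show "\<forall>\<^sub>F n in sequentially. \<forall>i<n. (c n i * t)^2 / 2 \<le> e" if e: "e > 0" for e
  proof -
    define d where "d = min 1 (e / (t^2 + 1))"
    have "t^2 + 1 > 0" using zero_le_power2[of t] by linarith
    then have d: "d > 0" using e by (simp add: d_def)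
    show ?thesis using cmax[OF d]
    proof eventually_elim
      case (elim n)
      show ?case
      proof (intro allI impI)
        fix i assume "i < n"
        then have ci: "\<bar>c n i\<bar> \<le> d" using elim by auto
        have "(c n i * t)^2 / 2 \<le> (c n i)^2 * t^2"
          by (simp add: power_mult_distrib)
        also have "\<dots> \<le> \<bar>c n i\<bar> * t^2"
        proof -
          have "\<bar>c n i\<bar> \<le> 1" using ci by (simp add: d_def)
          then have "(c n i)^2 \<le> \<bar>c n i\<bar>"
            by (metis abs_ge_zero mult_left_le power2_abs power2_eq_square)
          then show ?thesis by (intro mult_right_mono) auto
        qed
        also have "\<dots> \<le> d * t^2" using ci by (intro mult_right_mono) auto
        also have "\<dots> \<le> e / (t^2 + 1) * t^2" by (intro mult_right_mono) (auto simp: d_def)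
        also have "\<dots> \<le> e"
        proof -
          have p: "t^2 + 1 > 0" using zero_le_power2[of t] by linarith
          have "e * t^2 \<le> e * (t^2 + 1)" using e by (intro mult_left_mono) auto
          then show ?thesis using p by (simp add: field_simps)
        qed
        finally show "(c n i * t)^2 / 2 \<le> e" .
      qed
    qed
  qed
  show "(\<lambda>n. \<Sum>i<n. cmod (char (distr (P n) borel (eps n i)) (c n i * t) - complex_of_real (1 - (c n i * t)^2 / 2))) \<longlonglongrightarrow> 0"
  proof (rule Lim_null_comparison)
    have "(\<lambda>n. (\<bar>t\<bar>^3 * (1 + B)) * (\<Sum>i<n. \<bar>c n i\<bar> * (c n i)^2)) \<longlonglongrightarrow> (\<bar>t\<bar>^3 * (1 + B)) * 0"
      by (intro tendsto_mult tendsto_const sum_small[OF _ csum cmax]) auto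
    then show "(\<lambda>n. (\<bar>t\<bar>^3 * (1 + B)) * (\<Sum>i<n. \<bar>c n i\<bar> * (c n i)^2)) \<longlonglongrightarrow> 0" by simp
    show "\<forall>\<^sub>F n in sequentially. norm (\<Sum>i<n. cmod (char (distr (P n) borel (eps n i)) (c n i * t) - complex_of_real (1 - (c n i * t)^2 / 2)))
       \<le> (\<bar>t\<bar>^3 * (1 + B)) * (\<Sum>i<n. \<bar>c n i\<bar> * (c n i)^2)"
    proof (rule always_eventually, rule allI)
      fix n
      have "norm (\<Sum>i<n. cmod (char (distr (P n) borel (eps n i)) (c n i * t) - complex_of_real (1 - (c n i * t)^2 / 2)))
          = (\<Sum>i<n. cmod (char (distr (P n) borel (eps n i)) (c n i * t) - complex_of_real (1 - (c n i * t)^2 / 2)))"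
        by (simp add: sum_nonneg)
      also have "\<dots> \<le> (\<Sum>i<n. \<bar>c n i * t\<bar>^3 * (1 + B))"
      proof (rule sum_mono)
        fix i assume "i \<in> {..<n}"
        then have i: "i < n" by simp
        show "cmod (char (distr (P n) borel (eps n i)) (c n i * t) - complex_of_real (1 - (c n i * t)^2 / 2))
           \<le> \<bar>c n i * t\<bar>^3 * (1 + B)"
          by (rule prob_space.char_bound4[OF prob rv[OF i] mean0[OF i] var1[OF i] int4[OF i] mom4[OF i]])
      qed
      also have "\<dots> = (\<bar>t\<bar>^3 * (1 + B)) * (\<Sum>i<n. \<bar>c n i\<bar> * (c n i)^2)"
        unfolding sum_distrib_left by (intro sum.cong refl) (rule cube_aux)
      finally show "norm (\<Sum>i<n. cmod (char (distr (P n) borel (eps n i)) (c n i * t) - complex_of_real (1 - (c n i * t)^2 / 2)))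
       \<le> (\<bar>t\<bar>^3 * (1 + B)) * (\<Sum>i<n. \<bar>c n i\<bar> * (c n i)^2)" .
    qed
  qed
qed


definition hfun :: "(nat \<Rightarrow> real^'k) \<Rightarrow> nat \<Rightarrow> (nat \<Rightarrow> real) \<Rightarrow> real^'k \<Rightarrow> real" where
  "hfun X n z u = - (1 / (2 * real n)) * (\<Sum>i<n. (X i \<bullet> u)^2) + (\<Sum>i<n. (X i \<bullet> u) * z i / sqrt (real n))"

definition kap :: "nat \<Rightarrow> (nat \<Rightarrow> real) \<Rightarrow> real" where
  "kap n z = (\<Prod>i<n. 1 / sqrt (2 * pi * real n) * exp (- ((z i)^2 / 2)))"

lemma lik_factor:
  fixes X :: "nat \<Rightarrow> real^'k"
  assumes n: "n > 0"
  shows "lik X n (\<lambda>i. sqrt (real n) * (X i \<bullet> ((1 / sqrt (real n)) *\<^sub>R \<beta>0) + z i)) b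
       = kap n z * exp (hfun X n z (b - \<beta>0))"
proof -
  have sn: "sqrt (real n) > 0" using n by simp
  have trm: "normal_density (X i \<bullet> b) (sqrt (real n)) (sqrt (real n) * (X i \<bullet> ((1 / sqrt (real n)) *\<^sub>R \<beta>0) + z i))
     = (1 / sqrt (2 * pi * real n) * exp (- ((z i)^2 / 2))) *
       exp (- (1 / (2 * real n)) * (X i \<bullet> (b - \<beta>0))^2 + (X i \<bullet> (b - \<beta>0)) * z i / sqrt (real n))" for i
  proof -
    define Y where "Y = sqrt (real n) * (X i \<bullet> ((1 / sqrt (real n)) *\<^sub>R \<beta>0) + z i)"
    have Y: "Y - X i \<bullet> b = sqrt (real n) * z i - X i \<bullet> (b - \<beta>0)"
      using sn by (simp add: Y_def inner_diff_right algebra_simps)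
    have sq: "(sqrt (real n))^2 = real n" by simp
    have E: "- ((Y - X i \<bullet> b)^2 / (2 * (sqrt (real n))^2))
       = - ((z i)^2 / 2) + (- (1 / (2 * real n)) * (X i \<bullet> (b - \<beta>0))^2 + (X i \<bullet> (b - \<beta>0)) * z i / sqrt (real n))"
      unfolding Y sq using n sn by (simp add: power2_eq_square field_simps real_sqrt_mult_self)
    have "normal_density (X i \<bullet> b) (sqrt (real n)) Y
        = 1 / sqrt (2 * pi * (sqrt (real n))^2) * exp (- ((Y - X i \<bullet> b)^2 / (2 * (sqrt (real n))^2)))"
      unfolding normal_density_def by simp
    also have "\<dots> = 1 / sqrt (2 * pi * real n) * (exp (- ((z i)^2 / 2)) *
       exp (- (1 / (2 * real n)) * (X i \<bullet> (b - \<beta>0))^2 + (X i \<bullet> (b - \<beta>0)) * z i / sqrt (real n)))"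
      unfolding E by (simp add: exp_add[symmetric])
    finally show ?thesis unfolding Y_def by (simp only: mult.assoc)
  qed
  have "lik X n (\<lambda>i. sqrt (real n) * (X i \<bullet> ((1 / sqrt (real n)) *\<^sub>R \<beta>0) + z i)) b
     = (\<Prod>i<n. (1 / sqrt (2 * pi * real n) * exp (- ((z i)^2 / 2))) *
       exp (- (1 / (2 * real n)) * (X i \<bullet> (b - \<beta>0))^2 + (X i \<bullet> (b - \<beta>0)) * z i / sqrt (real n)))"
    unfolding lik_def trm ..
  also have "\<dots> = kap n z * exp (\<Sum>i<n. - (1 / (2 * real n)) * (X i \<bullet> (b - \<beta>0))^2 + (X i \<bullet> (b - \<beta>0)) * z i / sqrt (real n))"
    unfolding kap_def by (simp only: prod.distrib exp_sum[symmetric] finite_lessThan)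
  also have "(\<Sum>i<n. - (1 / (2 * real n)) * (X i \<bullet> (b - \<beta>0))^2 + (X i \<bullet> (b - \<beta>0)) * z i / sqrt (real n))
      = hfun X n z (b - \<beta>0)"
    unfolding hfun_def by (simp only: sum.distrib sum_distrib_left)
  finally show ?thesis .
qed

lemma sum_norm_sq:
  fixes X :: "nat \<Rightarrow> real^'k"
  assumes des: "\<forall>k. (\<Sum>i<n. (X i $ k)^2) = real n"
  shows "(\<Sum>i<n. (norm (X i))^2) = real n * real CARD('k)"
proof -
  have "(\<Sum>i<n. (norm (X i))^2) = (\<Sum>i<n. \<Sum>k\<in>UNIV. (X i $ k)^2)"
    by (intro sum.cong refl) (simp only: power2_norm_eq_inner inner_vec_def inner_real_def, simp add: power2_eq_square)
  also have "\<dots> = (\<Sum>k\<in>UNIV. \<Sum>i<n. (X i $ k)^2)" by (rule sum.swap)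
  also have "\<dots> = (\<Sum>k\<in>(UNIV::'k set). real n)" using des by simp
  also have "\<dots> = real n * real CARD('k)" by simp
  finally show ?thesis .
qed

lemma lin_part:
  fixes X :: "nat \<Rightarrow> real^'k" and \<delta> :: "real^'k"
  shows "(\<Sum>i<n. (X i \<bullet> \<delta>) * z i / s) = (\<Sum>k\<in>UNIV. \<delta> $ k * (\<Sum>i<n. X i $ k * z i / s))"
proof -
  have "(\<Sum>i<n. (X i \<bullet> \<delta>) * z i / s) = (\<Sum>i<n. \<Sum>k\<in>UNIV. \<delta> $ k * (X i $ k * z i / s))"
  proof (intro sum.cong refl)
    fix i
    have "(X i \<bullet> \<delta>) * z i / s = (\<Sum>k\<in>UNIV. X i $ k * \<delta> $ k) * z i / s"
      by (simp only: inner_vec_def inner_real_def)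
    also have "\<dots> = (\<Sum>k\<in>UNIV. \<delta> $ k * (X i $ k * z i / s))"
      unfolding sum_distrib_right sum_divide_distrib by (intro sum.cong refl) simp
    finally show "(X i \<bullet> \<delta>) * z i / s = (\<Sum>k\<in>UNIV. \<delta> $ k * (X i $ k * z i / s))" .
  qed
  also have "\<dots> = (\<Sum>k\<in>UNIV. \<Sum>i<n. \<delta> $ k * (X i $ k * z i / s))" by (rule sum.swap)
  also have "\<dots> = (\<Sum>k\<in>UNIV. \<delta> $ k * (\<Sum>i<n. X i $ k * z i / s))" by (simp add: sum_distrib_left)
  finally show ?thesis .
qed

lemma hfun_var:
  fixes X :: "nat \<Rightarrow> real^'k"
  assumes n: "n > 0" and des: "\<forall>k. (\<Sum>i<n. (X i $ k)^2) = real n"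
    and dl: "norm \<delta> \<le> r"
  shows "\<bar>hfun X n z (u + \<delta>) - hfun X n z u\<bar>
     \<le> r * (real CARD('k) * (norm u + r / 2) + (\<Sum>k\<in>UNIV. \<bar>\<Sum>i<n. X i $ k * z i / sqrt (real n)\<bar>))"
proof -
  define W where "W k = (\<Sum>i<n. X i $ k * z i / sqrt (real n))" for k
  have r0: "0 \<le> r" using dl norm_ge_zero order_trans by blast
  have diff: "hfun X n z (u + \<delta>) - hfun X n z u
     = - (1 / (2 * real n)) * (\<Sum>i<n. (X i \<bullet> \<delta>) * (2 * (X i \<bullet> u) + X i \<bullet> \<delta>))
       + (\<Sum>i<n. (X i \<bullet> \<delta>) * z i / sqrt (real n))"
  proof -
    have a: "(\<Sum>i<n. (X i \<bullet> (u + \<delta>))^2) - (\<Sum>i<n. (X i \<bullet> u)^2)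
        = (\<Sum>i<n. (X i \<bullet> \<delta>) * (2 * (X i \<bullet> u) + X i \<bullet> \<delta>))"
      by (simp add: sum_subtractf[symmetric] inner_add_right power2_eq_square algebra_simps)
    have b: "(\<Sum>i<n. (X i \<bullet> (u + \<delta>)) * z i / sqrt (real n)) - (\<Sum>i<n. (X i \<bullet> u) * z i / sqrt (real n))
        = (\<Sum>i<n. (X i \<bullet> \<delta>) * z i / sqrt (real n))"
      by (simp add: sum_subtractf[symmetric] inner_add_right algebra_simps add_divide_distrib)
    show ?thesis unfolding hfun_def using a b by (simp add: algebra_simps)
  qed
  have p1: "\<bar>\<Sum>i<n. (X i \<bullet> \<delta>) * (2 * (X i \<bullet> u) + X i \<bullet> \<delta>)\<bar> \<le> (real n * real CARD('k)) * (r * (2 * norm u + r))"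
  proof -
    have "\<bar>\<Sum>i<n. (X i \<bullet> \<delta>) * (2 * (X i \<bullet> u) + X i \<bullet> \<delta>)\<bar> \<le> (\<Sum>i<n. \<bar>(X i \<bullet> \<delta>) * (2 * (X i \<bullet> u) + X i \<bullet> \<delta>)\<bar>)"
      by (rule sum_abs)
    also have "\<dots> \<le> (\<Sum>i<n. (norm (X i))^2 * (r * (2 * norm u + r)))"
    proof (rule sum_mono)
      fix i
      have c1: "\<bar>X i \<bullet> \<delta>\<bar> \<le> norm (X i) * r"
        using Cauchy_Schwarz_ineq2[of "X i" \<delta>] dl by (meson mult_left_mono norm_ge_zero order_trans)
      have "\<bar>2 * (X i \<bullet> u) + X i \<bullet> \<delta>\<bar> \<le> 2 * \<bar>X i \<bullet> u\<bar> + \<bar>X i \<bullet> \<delta>\<bar>" by simp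
      also have "\<dots> \<le> 2 * (norm (X i) * norm u) + norm (X i) * r"
        using Cauchy_Schwarz_ineq2[of "X i" u] c1 by simp
      finally have c2: "\<bar>2 * (X i \<bullet> u) + X i \<bullet> \<delta>\<bar> \<le> norm (X i) * (2 * norm u + r)"
        by (simp add: algebra_simps)
      have "\<bar>(X i \<bullet> \<delta>) * (2 * (X i \<bullet> u) + X i \<bullet> \<delta>)\<bar> \<le> (norm (X i) * r) * (norm (X i) * (2 * norm u + r))"
        unfolding abs_mult by (intro mult_mono c1 c2) (auto simp: r0)
      then show "\<bar>(X i \<bullet> \<delta>) * (2 * (X i \<bullet> u) + X i \<bullet> \<delta>)\<bar> \<le> (norm (X i))^2 * (r * (2 * norm u + r))"
        by (simp add: power2_eq_square ac_simps)
    qed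
    also have "\<dots> = (\<Sum>i<n. (norm (X i))^2) * (r * (2 * norm u + r))" by (simp add: sum_distrib_right)
    also have "\<dots> = (real n * real CARD('k)) * (r * (2 * norm u + r))" using sum_norm_sq[OF des] by simp
    finally show ?thesis .
  qed
  have p2: "\<bar>\<Sum>i<n. (X i \<bullet> \<delta>) * z i / sqrt (real n)\<bar> \<le> r * (\<Sum>k\<in>UNIV. \<bar>W k\<bar>)"
  proof -
    have "\<bar>\<Sum>i<n. (X i \<bullet> \<delta>) * z i / sqrt (real n)\<bar> = \<bar>\<Sum>k\<in>UNIV. \<delta> $ k * W k\<bar>"
      unfolding lin_part W_def ..
    also have "\<dots> \<le> (\<Sum>k\<in>UNIV. \<bar>\<delta> $ k * W k\<bar>)" by (rule sum_abs)
    also have "\<dots> \<le> (\<Sum>k\<in>UNIV. r * \<bar>W k\<bar>)"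
      unfolding abs_mult
      by (intro sum_mono mult_right_mono) (auto intro: order_trans[OF component_le_norm_cart dl])
    finally show ?thesis by (simp add: sum_distrib_left)
  qed
  have "\<bar>hfun X n z (u + \<delta>) - hfun X n z u\<bar>
      \<le> (1 / (2 * real n)) * \<bar>\<Sum>i<n. (X i \<bullet> \<delta>) * (2 * (X i \<bullet> u) + X i \<bullet> \<delta>)\<bar>
        + \<bar>\<Sum>i<n. (X i \<bullet> \<delta>) * z i / sqrt (real n)\<bar>"
  proof -
    have "\<bar>- (1 / (2 * real n)) * A + Bv\<bar> \<le> (1 / (2 * real n)) * \<bar>A\<bar> + \<bar>Bv\<bar>" for A Bv
    proof -
      have "\<bar>- (1 / (2 * real n)) * A + Bv\<bar> \<le> \<bar>- (1 / (2 * real n)) * A\<bar> + \<bar>Bv\<bar>" by (rule abs_triangle_ineq)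
      also have "\<bar>- (1 / (2 * real n)) * A\<bar> = (1 / (2 * real n)) * \<bar>A\<bar>" by (simp add: abs_mult)
      finally show ?thesis .
    qed
    then show ?thesis unfolding diff .
  qed
  also have "\<dots> \<le> (1 / (2 * real n)) * ((real n * real CARD('k)) * (r * (2 * norm u + r))) + r * (\<Sum>k\<in>UNIV. \<bar>W k\<bar>)"
    using p1 p2 n by (intro add_mono mult_left_mono) auto
  also have "\<dots> = r * (real CARD('k) * (norm u + r / 2) + (\<Sum>k\<in>UNIV. \<bar>W k\<bar>))"
    using n by (simp add: field_simps)
  finally show ?thesis unfolding W_def .
qed

lemma ln_sandwich:
  fixes N V A E :: real
  assumes V: "V > 0" and lo: "exp (A - E) * V \<le> N" and hi: "N \<le> exp (A + E) * V"
  shows "N > 0" "\<bar>ln N - (A + ln V)\<bar> \<le> E"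
proof -
  have p: "exp (A - E) * V > 0" using V by simp
  then show N: "N > 0" using lo by linarith
  have "ln (exp (A - E) * V) \<le> ln N" using p N lo by (subst ln_le_cancel_iff) auto
  then have 1: "A - E + ln V \<le> ln N" using V by (simp add: ln_mult)
  have "ln N \<le> ln (exp (A + E) * V)" using p N hi V by (subst ln_le_cancel_iff) auto
  then have 2: "ln N \<le> A + E + ln V" using V by (simp add: ln_mult)
  show "\<bar>ln N - (A + ln V)\<bar> \<le> E" using 1 2 by linarith
qed

lemma ball_integral_bounds:
  fixes g :: "real^'k \<Rightarrow> real"
  assumes g[measurable]: "g \<in> borel_measurable borel"
    and lo: "\<And>b. b \<in> ball c r \<Longrightarrow> exp (a - e) \<le> g b"
    and hi: "\<And>b. b \<in> ball c r \<Longrightarrow> g b \<le> exp (a + e)"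
  shows "integrable lborel (\<lambda>b. indicator (ball c r) b * g b)"
    and "exp (a - e) * measure lborel (ball c r) \<le> (\<integral>b. indicator (ball c r) b * g b \<partial>lborel)"
    and "(\<integral>b. indicator (ball c r) b * g b \<partial>lborel) \<le> exp (a + e) * measure lborel (ball c r)"
proof -
  have ii: "integrable lborel (\<lambda>b. indicator (ball c r) b * K)" for K :: real
    by (intro Bochner_Integration.integrable_mult_left integrable_real_indicator)
       (use emeasure_lborel_ball_finite[of c r] in \<open>auto simp: less_top\<close>)
  have int_const: "(\<integral>b. indicator (ball c r) b * K \<partial>lborel) = K * measure lborel (ball c r)" for K :: real
    by simp
  show int: "integrable lborel (\<lambda>b. indicator (ball c r) b * g b)"
  proof (rule Bochner_Integration.integrable_bound[OF ii[of "exp (a + e)"]])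
    show "AE b in lborel. norm (indicator (ball c r) b * g b) \<le> norm (indicator (ball c r) b * exp (a + e))"
    proof (rule AE_I2)
      fix b show "norm (indicator (ball c r) b * g b) \<le> norm (indicator (ball c r) b * exp (a + e))"
      proof (cases "b \<in> ball c r")
        case True
        have "0 \<le> g b" using lo[OF True] exp_ge_zero order_trans by blast
        then show ?thesis using True hi[OF True] by simp
      qed simp
    qed
  qed (use g in \<open>auto simp: measurable_lborel2 intro!: borel_measurable_times borel_measurable_indicator\<close>)
  have "exp (a - e) * measure lborel (ball c r) = (\<integral>b. indicator (ball c r) b * exp (a - e) \<partial>lborel)"
    by (simp add: int_const)
  also have "\<dots> \<le> (\<integral>b. indicator (ball c r) b * g b \<partial>lborel)"
    by (intro integral_mono ii int) (auto simp: indicator_def lo)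
  finally show "exp (a - e) * measure lborel (ball c r) \<le> (\<integral>b. indicator (ball c r) b * g b \<partial>lborel)" .
  have "(\<integral>b. indicator (ball c r) b * g b \<partial>lborel) \<le> (\<integral>b. indicator (ball c r) b * exp (a + e) \<partial>lborel)"
    by (intro integral_mono ii int) (auto simp: indicator_def hi)
  also have "\<dots> = exp (a + e) * measure lborel (ball c r)" by (simp add: int_const)
  finally show "(\<integral>b. indicator (ball c r) b * g b \<partial>lborel) \<le> exp (a + e) * measure lborel (ball c r)" .
qed

lemma normal_density_le: "normal_density m s x \<le> 1 / sqrt (2 * pi * s^2)"
proof -
  have "exp (- ((x - m)\<^sup>2) / (2 * s\<^sup>2)) \<le> 1" by simp
  then show ?thesis unfolding normal_density_def
    by (intro mult_left_le) auto
qed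

lemma lik_le: "lik X n y b \<le> (1 / sqrt (2 * pi * real n)) ^ n"
proof -
  have "lik X n y b \<le> (\<Prod>i<n. 1 / sqrt (2 * pi * real n))"
    unfolding lik_def
  proof (intro prod_mono conjI)
    fix i
    show "normal_density (X i \<bullet> b) (sqrt (real n)) (y i) \<le> 1 / sqrt (2 * pi * real n)"
      using normal_density_le[of "X i \<bullet> b" "sqrt (real n)" "y i"] by simp
  qed simp
  then show ?thesis by simp
qed

lemma lik_nonneg: "0 \<le> lik X n y b"
  unfolding lik_def by (intro prod_nonneg) auto

lemma lik_measurable[measurable]: "lik X n y \<in> borel_measurable borel"
  unfolding lik_def[abs_def] normal_density_def by measurable

lemma hfun_zero[simp]: "hfun X n z 0 = 0"
  unfolding hfun_def by simp

lemma kap_pos: "kap n z > 0"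
  unfolding kap_def by (intro prod_pos) (auto simp: pi_gt_zero)

lemma pathwise:
  fixes X :: "nat \<Rightarrow> real^'k" and f :: "real^'k \<Rightarrow> real" and z :: "nat \<Rightarrow> real"
  assumes n: "n > 0" and des: "\<forall>k. (\<Sum>i<n. (X i $ k)^2) = real n"
    and fm[measurable]: "f \<in> borel_measurable borel" and fpos: "\<And>b. f b > 0" and fint: "integrable lborel f"
    and r: "r > 0"
    and f1: "\<And>b. b \<in> ball \<beta>1 r \<Longrightarrow> \<bar>ln (f b) - ln (f \<beta>1)\<bar> \<le> \<eta>"
    and f0: "\<And>b. b \<in> ball \<beta>0 r \<Longrightarrow> \<bar>ln (f b) - ln (f \<beta>0)\<bar> \<le> \<eta>"
  defines "\<rho> \<equiv> r * (real CARD('k) * (norm (\<beta>1 - \<beta>0) + r / 2) + (\<Sum>k\<in>UNIV. \<bar>\<Sum>i<n. X i $ k * z i / sqrt (real n)\<bar>))"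
  shows "\<bar>ln (posterior f X n (\<lambda>i. sqrt (real n) * (X i \<bullet> ((1 / sqrt (real n)) *\<^sub>R \<beta>0) + z i)) (ball \<beta>1 r)
          / posterior f X n (\<lambda>i. sqrt (real n) * (X i \<bullet> ((1 / sqrt (real n)) *\<^sub>R \<beta>0) + z i)) (ball \<beta>0 r))
         - (ln (f \<beta>1 / f \<beta>0) + hfun X n z (\<beta>1 - \<beta>0))\<bar> \<le> 2 * (\<eta> + \<rho>)"
proof -
  define Y where "Y = (\<lambda>i. sqrt (real n) * (X i \<bullet> ((1 / sqrt (real n)) *\<^sub>R \<beta>0) + z i))"
  define g where "g b = f b * lik X n Y b" for b
  define a where "a c = ln (f c) + ln (kap n z) + hfun X n z (c - \<beta>0)" for c
  define V where "V = measure lborel (ball \<beta>0 r)"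
  define N where "N c = (\<integral>b. indicator (ball c r) b * f b * lik X n Y b \<partial>lborel)" for c
  have gm[measurable]: "g \<in> borel_measurable borel" unfolding g_def by measurable
  have g_eq: "g b = f b * (kap n z * exp (hfun X n z (b - \<beta>0)))" for b
    unfolding g_def Y_def by (simp only: lik_factor[OF n])
  have gpos: "g b > 0" for b unfolding g_eq using fpos kap_pos by simp
  have V: "V > 0" "measure lborel (ball c r) = V" for c :: "real^'k"
    unfolding V_def using r by (simp_all add: content_ball)
  have key: "\<And>b. b \<in> ball c r \<Longrightarrow> exp (a c - (\<eta> + \<rho>)) \<le> g b \<and> g b \<le> exp (a c + (\<eta> + \<rho>))"
    if cn: "norm (c - \<beta>0) \<le> norm (\<beta>1 - \<beta>0)" and fc: "\<And>b. b \<in> ball c r \<Longrightarrow> \<bar>ln (f b) - ln (f c)\<bar> \<le> \<eta>" for c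
  proof -
    fix b assume b: "b \<in> ball c r"
    have lng: "ln (g b) = ln (f b) + ln (kap n z) + hfun X n z (b - \<beta>0)"
    proof -
      have "f b > 0" "kap n z > 0" using fpos kap_pos by auto
      then show ?thesis unfolding g_eq by (simp add: ln_mult)
    qed
    have "\<bar>hfun X n z ((c - \<beta>0) + (b - c)) - hfun X n z (c - \<beta>0)\<bar>
       \<le> r * (real CARD('k) * (norm (c - \<beta>0) + r / 2) + (\<Sum>k\<in>UNIV. \<bar>\<Sum>i<n. X i $ k * z i / sqrt (real n)\<bar>))"
      using b by (intro hfun_var[OF n des]) (simp add: dist_norm norm_minus_commute less_imp_le)
    also have "\<dots> \<le> \<rho>" unfolding \<rho>_def using r cn
      by (intro mult_left_mono add_right_mono) auto
    finally have hb: "\<bar>hfun X n z (b - \<beta>0) - hfun X n z (c - \<beta>0)\<bar> \<le> \<rho>" by simp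
    have "\<bar>ln (g b) - a c\<bar> \<le> \<eta> + \<rho>"
      unfolding lng a_def using fc[OF b] hb by linarith
    then have "a c - (\<eta> + \<rho>) \<le> ln (g b)" "ln (g b) \<le> a c + (\<eta> + \<rho>)" by linarith+
    then show "exp (a c - (\<eta> + \<rho>)) \<le> g b \<and> g b \<le> exp (a c + (\<eta> + \<rho>))"
      using gpos[of b] by (metis exp_le_cancel_iff exp_ln)
  qed
  have Nc: "N c = (\<integral>b. indicator (ball c r) b * g b \<partial>lborel)" for c
    unfolding N_def g_def by (simp add: mult.assoc)
  have bnd: "N c > 0 \<and> \<bar>ln (N c) - (a c + ln V)\<bar> \<le> \<eta> + \<rho> \<and> integrable lborel (\<lambda>b. indicator (ball c r) b * g b)"
    if cn: "norm (c - \<beta>0) \<le> norm (\<beta>1 - \<beta>0)" and fc: "\<And>b. b \<in> ball c r \<Longrightarrow> \<bar>ln (f b) - ln (f c)\<bar> \<le> \<eta>" for c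
  proof -
    note k = key[OF cn fc]
    have i: "integrable lborel (\<lambda>b. indicator (ball c r) b * g b)"
      and l: "exp (a c - (\<eta> + \<rho>)) * V \<le> N c" and h: "N c \<le> exp (a c + (\<eta> + \<rho>)) * V"
      using ball_integral_bounds[OF gm, of c r "a c" "\<eta> + \<rho>"] k V(2)[of c] unfolding Nc by auto
    show ?thesis using ln_sandwich[OF V(1) l h] i by auto
  qed
  have b1: "N \<beta>1 > 0 \<and> \<bar>ln (N \<beta>1) - (a \<beta>1 + ln V)\<bar> \<le> \<eta> + \<rho>" using bnd[OF _ f1] by simp
  have b0: "N \<beta>0 > 0 \<and> \<bar>ln (N \<beta>0) - (a \<beta>0 + ln V)\<bar> \<le> \<eta> + \<rho> \<and> integrable lborel (\<lambda>b. indicator (ball \<beta>0 r) b * g b)"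
    using bnd[OF _ f0] by simp
  define Dn where "Dn = (\<integral>b. f b * lik X n Y b \<partial>lborel)"
  have gint: "integrable lborel g"
  proof (rule Bochner_Integration.integrable_bound[of _ "\<lambda>b. f b * (1 / sqrt (2 * pi * real n)) ^ n"])
    show "integrable lborel (\<lambda>b. f b * (1 / sqrt (2 * pi * real n)) ^ n)"
      by (intro Bochner_Integration.integrable_mult_left fint)
    show "AE b in lborel. norm (g b) \<le> norm (f b * (1 / sqrt (2 * pi * real n)) ^ n)"
    proof (rule AE_I2)
      fix b
      have "f b * lik X n Y b \<le> f b * (1 / sqrt (2 * pi * real n)) ^ n"
        using fpos[of b] lik_le[of X n Y b] by (intro mult_left_mono) auto
      then show "norm (g b) \<le> norm (f b * (1 / sqrt (2 * pi * real n)) ^ n)"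
        using gpos[of b] fpos[of b] unfolding g_def by simp
    qed
  qed (simp add: measurable_lborel2)
  have "N \<beta>0 \<le> Dn"
    unfolding Nc Dn_def g_def[symmetric]
    using b0 gint gpos by (intro integral_mono) (auto simp: indicator_def less_imp_le)
  then have Dn: "Dn \<noteq> 0" using b0 by auto
  have post: "posterior f X n Y (ball c r) = N c / Dn" for c
    unfolding posterior_def N_def Dn_def ..
  have ratio: "posterior f X n Y (ball \<beta>1 r) / posterior f X n Y (ball \<beta>0 r) = N \<beta>1 / N \<beta>0"
    unfolding post using Dn by simp
  have q1: "ln (N \<beta>1 / N \<beta>0) = ln (N \<beta>1) - ln (N \<beta>0)" using b1 b0 by (simp add: ln_div)
  have q2: "ln (f \<beta>1 / f \<beta>0) = ln (f \<beta>1) - ln (f \<beta>0)"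
    using fpos[of \<beta>1] fpos[of \<beta>0] by (simp add: ln_div)
  have q3: "a \<beta>1 - a \<beta>0 = ln (f \<beta>1) - ln (f \<beta>0) + hfun X n z (\<beta>1 - \<beta>0)"
    unfolding a_def by simp
  have e1: "\<bar>ln (N \<beta>1) - (a \<beta>1 + ln V)\<bar> \<le> \<eta> + \<rho>" using b1 by simp
  have e0: "\<bar>ln (N \<beta>0) - (a \<beta>0 + ln V)\<bar> \<le> \<eta> + \<rho>" using b0 by simp
  have "\<bar>ln (N \<beta>1 / N \<beta>0) - (ln (f \<beta>1 / f \<beta>0) + hfun X n z (\<beta>1 - \<beta>0))\<bar> \<le> 2 * (\<eta> + \<rho>)"
    unfolding q1 q2 using q3 abs_le_D1[OF e1] abs_le_D2[OF e1] abs_le_D1[OF e0] abs_le_D2[OF e0]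
    by (intro abs_leI) (smt (verit))+
  then show ?thesis
    unfolding Y_def[symmetric] ratio .
qed


lemma nd_scale: "s > 0 \<Longrightarrow> s * normal_density 0 s (s * y) = std_normal_density y"
  unfolding normal_density_def
  by (simp add: real_sqrt_mult power_mult_distrib field_simps)

lemma char_gauss:
  assumes v: "v \<ge> 0"
  shows "char (gauss_law 0 v) t = complex_of_real (exp (- (v * t^2 / 2)))"
proof (cases "v = 0")
  case True
  then show ?thesis unfolding gauss_law_def char_def
    by (simp add: integral_return)
next
  case False
  define s where "s = sqrt v"
  have s: "s > 0" using v False by (simp add: s_def)
  have "char (gauss_law 0 v) t = (\<integral>x. normal_density 0 s x *\<^sub>R iexp (t * x) \<partial>lborel)"
    unfolding gauss_law_def char_def s_def using False
    by (simp add: integral_density)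
  also have "\<dots> = \<bar>s\<bar> *\<^sub>R (\<integral>y. normal_density 0 s (0 + s * y) *\<^sub>R iexp (t * (0 + s * y)) \<partial>lborel)"
    using s by (intro lborel_integral_real_affine) simp
  also have "\<dots> = (\<integral>y. (\<bar>s\<bar> * normal_density 0 s (0 + s * y)) *\<^sub>R iexp (t * (0 + s * y)) \<partial>lborel)"
    by (simp add: integral_scaleR_right[symmetric] scaleR_scaleR)
  also have "\<dots> = (\<integral>y. std_normal_density y *\<^sub>R iexp ((t * s) * y) \<partial>lborel)"
    using s by (intro Bochner_Integration.integral_cong refl) (simp add: nd_scale mult.assoc)
  also have "\<dots> = char std_normal_distribution (t * s)"
    unfolding char_def by (simp add: integral_density)
  also have "\<dots> = complex_of_real (exp (- ((t * s)^2) / 2))"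
    by (simp add: char_std_normal_distribution)
  also have "(t * s)^2 = v * t^2" using v by (simp add: s_def power_mult_distrib)
  finally show ?thesis by simp
qed


lemma quad_expand: "d \<bullet> (A *v d) = (\<Sum>j\<in>UNIV. \<Sum>l\<in>UNIV. d$j * A$j$l * d$l)" for d :: "real^'k"
  by (simp add: inner_vec_def matrix_vector_mult_def sum_distrib_left mult.assoc)

lemma quad_gram: "d \<bullet> (gram X n *v d) = (\<Sum>i<n. (X i \<bullet> d)^2)" for d :: "real^'k"
proof -
  have "d \<bullet> (gram X n *v d) = (\<Sum>j\<in>UNIV. \<Sum>l\<in>UNIV. \<Sum>i<n. d$j * (X i $ j * X i $ l) * d$l)"
    unfolding quad_expand gram_def by (simp add: sum_distrib_left sum_distrib_right)
  also have "\<dots> = (\<Sum>j\<in>UNIV. \<Sum>i<n. \<Sum>l\<in>UNIV. d$j * (X i $ j * X i $ l) * d$l)"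
    by (intro sum.cong refl sum.swap)
  also have "\<dots> = (\<Sum>i<n. \<Sum>j\<in>UNIV. \<Sum>l\<in>UNIV. d$j * (X i $ j * X i $ l) * d$l)"
    by (rule sum.swap)
  also have "\<dots> = (\<Sum>i<n. (X i \<bullet> d)^2)"
  proof (intro sum.cong refl)
    fix i
    have "(X i \<bullet> d)^2 = (\<Sum>j\<in>UNIV. X i $ j * d $ j) * (\<Sum>l\<in>UNIV. X i $ l * d $ l)"
      by (simp add: inner_vec_def power2_eq_square)
    also have "\<dots> = (\<Sum>j\<in>UNIV. \<Sum>l\<in>UNIV. d$j * (X i $ j * X i $ l) * d$l)"
      by (simp add: sum_distrib_left sum_distrib_right ac_simps)
    finally show "(\<Sum>j\<in>UNIV. \<Sum>l\<in>UNIV. d$j * (X i $ j * X i $ l) * d$l) = (X i \<bullet> d)^2" by simp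
  qed
  finally show ?thesis .
qed

lemma quad_scale: "d \<bullet> ((c *\<^sub>R A) *v d) = c * (d \<bullet> (A *v d))" for d :: "real^'k"
  unfolding quad_expand by (simp add: sum_distrib_left ac_simps)

lemma quad_tendsto:
  fixes A :: "nat \<Rightarrow> real^'k^'k"
  assumes "A \<longlonglongrightarrow> A0"
  shows "(\<lambda>n. d \<bullet> (A n *v d)) \<longlonglongrightarrow> d \<bullet> (A0 *v d)"
  unfolding quad_expand
  by (intro tendsto_sum tendsto_mult tendsto_const tendsto_vec_nth assms)

lemma quad_nonneg: "pos_def_mat S \<Longrightarrow> 0 \<le> d \<bullet> (S *v d)"
  unfolding pos_def_mat_def by (cases "d = 0") (auto intro: less_imp_le)


lemma (in prob_space) sum_sq_expect:
  fixes e :: "nat \<Rightarrow> 'a \<Rightarrow> real"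
  assumes ind: "indep_vars (\<lambda>_. borel) e {..<n}"
    and m0: "\<And>i. i < n \<Longrightarrow> expectation (e i) = 0"
    and v1: "\<And>i. i < n \<Longrightarrow> expectation (\<lambda>w. (e i w)^2) = 1"
  shows "integrable M (\<lambda>w. (\<Sum>i<n. a i * e i w)^2)"
    and "expectation (\<lambda>w. (\<Sum>i<n. a i * e i w)^2) = (\<Sum>i<n. (a i)^2)"
proof -
  have rv[measurable]: "e i \<in> borel_measurable M" if "i < n" for i
    using ind that by (auto simp: indep_vars_def)
  have i2: "integrable M (\<lambda>w. (e i w)^2)" if "i < n" for i
    using v1[OF that] not_integrable_integral_eq by fastforce
  have i1: "integrable M (e i)" if i: "i < n" for i
  proof (rule Bochner_Integration.integrable_bound[of _ "\<lambda>w. 1 + (e i w)^2"])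
    show "integrable M (\<lambda>w. 1 + (e i w)^2)" using i2[OF i] by simp
    show "AE w in M. norm (e i w) \<le> norm (1 + (e i w)^2)"
    proof (rule AE_I2)
      fix w
      have "\<bar>e i w\<bar> \<le> 1 + (e i w)^2"
      proof (cases "\<bar>e i w\<bar> \<le> 1")
        case False
        then have "\<bar>e i w\<bar> * 1 \<le> \<bar>e i w\<bar> * \<bar>e i w\<bar>" by (intro mult_left_mono) auto
        then show ?thesis by (simp add: power2_eq_square)
      qed (simp add: add_increasing2)
      then show "norm (e i w) \<le> norm (1 + (e i w)^2)" by simp
    qed
  qed (use i in simp)
  have iij: "integrable M (\<lambda>w. e i w * e j w)" if "i < n" "j < n" for i j
  proof (rule Bochner_Integration.integrable_bound[of _ "\<lambda>w. (e i w)^2 + (e j w)^2"])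
    show "integrable M (\<lambda>w. (e i w)^2 + (e j w)^2)" using i2 that by simp
    show "AE w in M. norm (e i w * e j w) \<le> norm ((e i w)^2 + (e j w)^2)"
    proof (rule AE_I2)
      fix w
      have "0 \<le> (\<bar>e i w\<bar> - \<bar>e j w\<bar>)^2" by simp
      then have "\<bar>e i w\<bar> * \<bar>e j w\<bar> \<le> (e i w)^2 + (e j w)^2"
        by (simp add: power2_eq_square algebra_simps) (smt (verit) abs_mult_self_eq mult_nonneg_nonneg abs_ge_zero)
      then show "norm (e i w * e j w) \<le> norm ((e i w)^2 + (e j w)^2)" by (simp add: abs_mult)
    qed
  qed (use that in simp)
  have Eij: "expectation (\<lambda>w. e i w * e j w) = (if i = j then 1 else 0)" if "i < n" "j < n" for i j
  proof (cases "i = j")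
    case True then show ?thesis using v1[OF that(1)] by (simp add: power2_eq_square)
  next
    case False
    have ind2: "indep_vars (\<lambda>_. borel) e {i, j}"
      by (rule indep_vars_subset[OF ind]) (use that in auto)
    have "expectation (\<lambda>w. \<Prod>k\<in>{i,j}. e k w) = (\<Prod>k\<in>{i,j}. expectation (e k))"
      by (rule indep_vars_lebesgue_integral[OF _ ind2]) (use that i1 in auto)
    then show ?thesis using False m0 that by simp
  qed
  have sq: "(\<Sum>i<n. a i * e i w)^2 = (\<Sum>i<n. \<Sum>j<n. (a i * a j) * (e i w * e j w))" for w
    by (simp add: power2_eq_square sum_product ac_simps)
  show "integrable M (\<lambda>w. (\<Sum>i<n. a i * e i w)^2)"
    unfolding sq by (intro Bochner_Integration.integrable_sum Bochner_Integration.integrable_mult_right iij) auto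
  have "expectation (\<lambda>w. (\<Sum>i<n. a i * e i w)^2) = (\<Sum>i<n. \<Sum>j<n. (a i * a j) * expectation (\<lambda>w. e i w * e j w))"
    unfolding sq
  proof -
    have "expectation (\<lambda>w. \<Sum>i<n. \<Sum>j<n. (a i * a j) * (e i w * e j w))
        = (\<Sum>i<n. expectation (\<lambda>w. \<Sum>j<n. (a i * a j) * (e i w * e j w)))"
      by (rule Bochner_Integration.integral_sum)
         (auto intro!: Bochner_Integration.integrable_sum Bochner_Integration.integrable_mult_right iij)
    also have "\<dots> = (\<Sum>i<n. \<Sum>j<n. (a i * a j) * expectation (\<lambda>w. e i w * e j w))"
    proof (intro sum.cong refl)
      fix i assume "i \<in> {..<n}"
      then show "expectation (\<lambda>w. \<Sum>j<n. (a i * a j) * (e i w * e j w))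
          = (\<Sum>j<n. (a i * a j) * expectation (\<lambda>w. e i w * e j w))"
        by (subst Bochner_Integration.integral_sum)
           (auto intro!: Bochner_Integration.integrable_mult_right iij)
    qed
    finally show "expectation (\<lambda>w. \<Sum>i<n. \<Sum>j<n. (a i * a j) * (e i w * e j w))
        = (\<Sum>i<n. \<Sum>j<n. (a i * a j) * expectation (\<lambda>w. e i w * e j w))" .
  qed
  also have "\<dots> = (\<Sum>i<n. \<Sum>j<n. (a i * a j) * (if i = j then 1 else 0))"
    by (intro sum.cong refl) (simp add: Eij)
  also have "\<dots> = (\<Sum>i<n. (a i)^2)"
    by (simp add: power2_eq_square if_distrib sum.delta cong: if_cong)
  finally show "expectation (\<lambda>w. (\<Sum>i<n. a i * e i w)^2) = (\<Sum>i<n. (a i)^2)" .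
qed

lemma (in prob_space) abs_expect_le:
  fixes S :: "'a \<Rightarrow> real"
  assumes [measurable]: "S \<in> borel_measurable M" and i: "integrable M (\<lambda>w. (S w)^2)"
  shows "integrable M (\<lambda>w. \<bar>S w\<bar>)" "expectation (\<lambda>w. \<bar>S w\<bar>) \<le> (1 + expectation (\<lambda>w. (S w)^2)) / 2"
proof -
  have b: "\<bar>y\<bar> \<le> (1 + y^2) / 2" for y :: real
  proof -
    have "0 \<le> (\<bar>y\<bar> - 1)^2" by simp
    then show ?thesis by (simp add: power2_eq_square algebra_simps abs_mult_self_eq)
  qed
  have i2: "integrable M (\<lambda>w. (1 + (S w)^2) / 2)" using i by simp
  show ia: "integrable M (\<lambda>w. \<bar>S w\<bar>)"
  proof (rule Bochner_Integration.integrable_bound[OF i2])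
    show "AE w in M. norm \<bar>S w\<bar> \<le> norm ((1 + (S w)^2) / 2)"
    proof (rule AE_I2)
      fix w
      have "0 \<le> (1 + (S w)^2) / 2" by (simp add: add_nonneg_nonneg)
      then show "norm \<bar>S w\<bar> \<le> norm ((1 + (S w)^2) / 2)" using b[of "S w"] by simp
    qed
  qed simp
  have "expectation (\<lambda>w. \<bar>S w\<bar>) \<le> expectation (\<lambda>w. (1 + (S w)^2) / 2)"
  proof (intro integral_mono ia i2)
    fix w show "\<bar>S w\<bar> \<le> (1 + (S w)^2) / 2" by (rule b)
  qed
  also have "\<dots> = (1 + expectation (\<lambda>w. (S w)^2)) / 2" using i by (simp add: prob_space)
  finally show "expectation (\<lambda>w. \<bar>S w\<bar>) \<le> (1 + expectation (\<lambda>w. (S w)^2)) / 2" .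
qed


lemma iexp_diff_le: "cmod (iexp a - iexp b) \<le> \<bar>a - b\<bar>"
proof -
  have "iexp a - iexp b = iexp b * (iexp (a - b) - 1)"
    by (simp add: algebra_simps exp_diff[symmetric] exp_add[symmetric] ring_distribs)
  then have "cmod (iexp a - iexp b) = cmod (iexp (a - b) - 1)"
    by (simp add: norm_mult)
  also have "\<dots> \<le> \<bar>a - b\<bar>"
    using iexp_approx1[of "a - b" 0] by simp
  finally show ?thesis .
qed

lemma char_distr_eq: "X \<in> borel_measurable M \<Longrightarrow> char (distr M borel X) t = (CLINT w|M. iexp (t * X w))"
  unfolding char_def by (simp add: integral_distr)

lemma char_close:
  fixes T U B :: "'a \<Rightarrow> real"
  assumes M: "prob_space M" and [measurable]: "T \<in> borel_measurable M" "U \<in> borel_measurable M"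
    and iB: "integrable M B" and TB: "\<And>w. w \<in> space M \<Longrightarrow> \<bar>T w - U w\<bar> \<le> B w"
  shows "cmod (char (distr M borel T) t - char (distr M borel U) t) \<le> \<bar>t\<bar> * (\<integral>w. B w \<partial>M)"
proof -
  interpret prob_space M by fact
  have iT: "integrable M (\<lambda>w. iexp (t * T w))" by (rule integrable_iexp) auto
  have iU: "integrable M (\<lambda>w. iexp (t * U w))" by (rule integrable_iexp) auto
  have "char (distr M borel T) t - char (distr M borel U) t = (CLINT w|M. iexp (t * T w)) - (CLINT w|M. iexp (t * U w))"
    by (subst (1 2) char_distr_eq) auto
  also have "\<dots> = (CLINT w|M. iexp (t * T w) - iexp (t * U w))"
    by (rule Bochner_Integration.integral_diff[OF iT iU, symmetric])
  also have "cmod \<dots> \<le> (\<integral>w. cmod (iexp (t * T w) - iexp (t * U w)) \<partial>M)"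
    by (rule integral_norm_bound)
  also have "\<dots> \<le> (\<integral>w. \<bar>t\<bar> * B w \<partial>M)"
  proof (rule integral_mono)
    show "integrable M (\<lambda>w. cmod (iexp (t * T w) - iexp (t * U w)))"
      using iT iU by (intro integrable_norm Bochner_Integration.integrable_diff)
    show "integrable M (\<lambda>w. \<bar>t\<bar> * B w)" using iB by simp
    fix w assume w: "w \<in> space M"
    have "cmod (iexp (t * T w) - iexp (t * U w)) \<le> \<bar>t * T w - t * U w\<bar>" by (rule iexp_diff_le)
    also have "\<dots> = \<bar>t\<bar> * \<bar>T w - U w\<bar>" by (simp add: abs_mult right_diff_distrib[symmetric])
    also have "\<dots> \<le> \<bar>t\<bar> * B w" using TB[OF w] by (intro mult_left_mono) auto
    finally show "cmod (iexp (t * T w) - iexp (t * U w)) \<le> \<bar>t\<bar> * B w" .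
  qed
  also have "\<dots> = \<bar>t\<bar> * (\<integral>w. B w \<partial>M)" by simp
  finally show ?thesis .
qed

lemma char_shift:
  fixes X :: "'a \<Rightarrow> real"
  assumes [measurable]: "X \<in> borel_measurable M"
  shows "char (distr M borel (\<lambda>w. a + X w)) t = iexp (t * a) * char (distr M borel X) t"
proof -
  have "char (distr M borel (\<lambda>w. a + X w)) t = (CLINT w|M. iexp (t * a) * iexp (t * X w))"
    by (simp add: char_distr_eq distrib_left exp_add)
  also have "\<dots> = iexp (t * a) * char (distr M borel X) t"
    by (simp add: char_distr_eq)
  finally show ?thesis .
qed

lemma char_scale:
  fixes X :: "'a \<Rightarrow> real"
  assumes [measurable]: "X \<in> borel_measurable M"
  shows "char (distr M borel (\<lambda>w. c * X w)) t = char (distr M borel X) (c * t)"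
  by (simp add: char_distr_eq ac_simps)

lemma post_meas:
  fixes M :: "'a measure" and e :: "nat \<Rightarrow> 'a \<Rightarrow> real" and X :: "nat \<Rightarrow> real^'k"
  assumes rv: "\<And>i. i < n \<Longrightarrow> e i \<in> borel_measurable M"
    and fm[measurable]: "f \<in> borel_measurable borel" and A[measurable]: "A \<in> sets borel"
  shows "(\<lambda>w. posterior f X n (\<lambda>i. sqrt (real n) * (X i \<bullet> ((1 / sqrt (real n)) *\<^sub>R \<beta>0) + e i w)) A) \<in> borel_measurable M"
proof -
  define G where "G p = (\<Prod>i<n. normal_density (X i \<bullet> snd p) (sqrt (real n))
      (sqrt (real n) * (X i \<bullet> ((1 / sqrt (real n)) *\<^sub>R \<beta>0) + e i (fst p))))" for p :: "'a \<times> (real^'k)"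
  have Gm[measurable]: "G \<in> borel_measurable (M \<Otimes>\<^sub>M lborel)"
    unfolding G_def
  proof (rule borel_measurable_prod)
    fix i assume "i \<in> {..<n}"
    then have [measurable]: "e i \<in> borel_measurable M" using rv by simp
    show "(\<lambda>p. normal_density (X i \<bullet> snd p) (sqrt (real n))
      (sqrt (real n) * (X i \<bullet> ((1 / sqrt (real n)) *\<^sub>R \<beta>0) + e i (fst p)))) \<in> borel_measurable (M \<Otimes>\<^sub>M lborel)"
      unfolding normal_density_def by measurable
  qed
  have N: "(\<lambda>w. \<integral>b. indicator A b * f b * lik X n (\<lambda>i. sqrt (real n) * (X i \<bullet> ((1 / sqrt (real n)) *\<^sub>R \<beta>0) + e i w)) b \<partial>lborel) \<in> borel_measurable M"
  proof (rule lborel.borel_measurable_lebesgue_integral)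
    have "case_prod (\<lambda>w b. indicator A b * f b * lik X n (\<lambda>i. sqrt (real n) * (X i \<bullet> ((1 / sqrt (real n)) *\<^sub>R \<beta>0) + e i w)) b)
       = (\<lambda>p. indicator A (snd p) * f (snd p) * G p)"
      unfolding G_def lik_def by (auto simp: fun_eq_iff)
    moreover have "(\<lambda>p. indicator A (snd p) * f (snd p) * G p) \<in> borel_measurable (M \<Otimes>\<^sub>M lborel)" by measurable
    ultimately show "case_prod (\<lambda>w b. indicator A b * f b * lik X n (\<lambda>i. sqrt (real n) * (X i \<bullet> ((1 / sqrt (real n)) *\<^sub>R \<beta>0) + e i w)) b) \<in> borel_measurable (M \<Otimes>\<^sub>M lborel)"
      by simp
  qed
  have D: "(\<lambda>w. \<integral>b. f b * lik X n (\<lambda>i. sqrt (real n) * (X i \<bullet> ((1 / sqrt (real n)) *\<^sub>R \<beta>0) + e i w)) b \<partial>lborel) \<in> borel_measurable M"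
  proof (rule lborel.borel_measurable_lebesgue_integral)
    have "case_prod (\<lambda>w b. f b * lik X n (\<lambda>i. sqrt (real n) * (X i \<bullet> ((1 / sqrt (real n)) *\<^sub>R \<beta>0) + e i w)) b)
       = (\<lambda>p. f (snd p) * G p)"
      unfolding G_def lik_def by (auto simp: fun_eq_iff)
    moreover have "(\<lambda>p. f (snd p) * G p) \<in> borel_measurable (M \<Otimes>\<^sub>M lborel)" by measurable
    ultimately show "case_prod (\<lambda>w b. f b * lik X n (\<lambda>i. sqrt (real n) * (X i \<bullet> ((1 / sqrt (real n)) *\<^sub>R \<beta>0) + e i w)) b) \<in> borel_measurable (M \<Otimes>\<^sub>M lborel)"
      by simp
  qed
  show ?thesis unfolding posterior_def using N D by measurable
qed


theorem theorem3:
  fixes x :: "nat \<Rightarrow> nat \<Rightarrow> real^'k"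
    and \<beta>0 \<beta>1 :: "real^'k"
    and \<Sigma>0 :: "real^'k^'k"
    and P :: "nat \<Rightarrow> 'a measure"
    and eps :: "nat \<Rightarrow> nat \<Rightarrow> 'a \<Rightarrow> real"
    and B C :: real
    and f :: "real^'k \<Rightarrow> real"
  assumes design_i: "\<forall>\<^sub>F n in sequentially. \<forall>k.
              (\<Sum>i<n. x n i $ k) = 0 \<and> (\<Sum>i<n. (x n i $ k)^2) = real n"
    and design_ii: "(\<lambda>n. (MAX i\<in>{..<n}. norm (x n i)) / sqrt (real n)) \<longlonglongrightarrow> 0"
    and design_iii: "\<forall>\<^sub>F n in sequentially. pos_def_mat (gram (x n) n)"
    and design_iv: "(\<lambda>n. (1 / real n) *\<^sub>R gram (x n) n) \<longlonglongrightarrow> \<Sigma>0"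
    and Sigma_pd: "pos_def_mat \<Sigma>0"
    and prob: "\<And>n. prob_space (P n)"
    and indep: "\<And>n. prob_space.indep_vars (P n) (\<lambda>_. borel) (eps n) {..<n}"
    and mean0: "\<And>n i. i < n \<Longrightarrow> prob_space.expectation (P n) (eps n i) = 0"
    and var1: "\<And>n i. i < n \<Longrightarrow> prob_space.expectation (P n) (\<lambda>w. (eps n i w)^2) = 1"
    and int4: "\<And>n i. i < n \<Longrightarrow> integrable (P n) (\<lambda>w. (eps n i w)^4)"
    and mom4: "\<And>n i. i < n \<Longrightarrow> prob_space.expectation (P n) (\<lambda>w. (eps n i w)^4) \<le> B"
    and f_cont: "continuous_on UNIV f"
    and f_pos: "\<And>b. f b > 0"
    and f_dens: "(\<integral>\<^sup>+ b. ennreal (f b) \<partial>lborel) = 1"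
    and C_pos: "C > 0"
  shows "\<forall>Q (Z :: 'b \<Rightarrow> real^'k). mvnormal Q Z \<Sigma>0 \<longrightarrow>
    (let Ystar = (\<lambda>n w i. sqrt (real n) *
                   (x n i \<bullet> ((1 / sqrt (real n)) *\<^sub>R \<beta>0) + eps n i w));
         T = (\<lambda>n w. ln (posterior f (x n) n (Ystar n w) (ball \<beta>1 (C / sqrt (real n)))
                      / posterior f (x n) n (Ystar n w) (ball \<beta>0 (C / sqrt (real n)))));
         d = \<beta>1 - \<beta>0;
         L = (\<lambda>w. ln (f \<beta>1 / f \<beta>0) - 1/2 * (d \<bullet> (\<Sigma>0 *v d)) + d \<bullet> Z w)
     in (\<forall>n. T n \<in> borel_measurable (P n)) \<and>
        weak_conv_m (\<lambda>n. distr (P n) borel (T n)) (distr Q borel L))"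
proof (intro allI impI)
  fix Q and Z :: "'b \<Rightarrow> real^'k"
  assume mv: "mvnormal Q Z \<Sigma>0"
  define d where "d = \<beta>1 - \<beta>0"
  define v where "v = d \<bullet> (\<Sigma>0 *v d)"
  define K where "K = real CARD('k)"
  define r where "r n = C / sqrt (real n)" for n :: nat
  define Ys where "Ys = (\<lambda>n w i. sqrt (real n) * (x n i \<bullet> ((1 / sqrt (real n)) *\<^sub>R \<beta>0) + eps n i w))"
  define T where "T = (\<lambda>n w. ln (posterior f (x n) n (Ys n w) (ball \<beta>1 (C / sqrt (real n)))
                      / posterior f (x n) n (Ys n w) (ball \<beta>0 (C / sqrt (real n)))))"
  define L where "L = (\<lambda>w. ln (f \<beta>1 / f \<beta>0) - 1/2 * (d \<bullet> (\<Sigma>0 *v d)) + d \<bullet> Z w)"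
  define c where "c n i = (x n i \<bullet> d) / sqrt (real n)" for n i
  define S where "S n w = (\<Sum>i<n. c n i * eps n i w)" for n w
  define q where "q n = (\<Sum>i<n. (c n i)^2)" for n
  define W where "W n k w = (\<Sum>i<n. (x n i $ k / sqrt (real n)) * eps n i w)" for n k w
  define U where "U n w = (ln (f \<beta>1 / f \<beta>0) - q n / 2) + S n w" for n w

  have rv: "eps n i \<in> borel_measurable (P n)" if "i < n" for n i
    using indep[of n] that prob[of n] by (auto simp: prob_space.indep_vars_def)
  have fm[measurable]: "f \<in> borel_measurable borel"
    using f_cont by (rule borel_measurable_continuous_onI)
  have Tm: "T n \<in> borel_measurable (P n)" for n
  proof -
    have p1[measurable]: "(\<lambda>w. posterior f (x n) n (Ys n w) (ball \<beta>1 (C / sqrt (real n)))) \<in> borel_measurable (P n)"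
      unfolding Ys_def by (rule post_meas[OF rv fm]) auto
    have p0[measurable]: "(\<lambda>w. posterior f (x n) n (Ys n w) (ball \<beta>0 (C / sqrt (real n)))) \<in> borel_measurable (P n)"
      unfolding Ys_def by (rule post_meas[OF rv fm]) auto
    show ?thesis unfolding T_def by measurable
  qed
  have Sm[measurable]: "S n \<in> borel_measurable (P n)" for n
    unfolding S_def by (intro borel_measurable_sum borel_measurable_times borel_measurable_const rv) auto
  have Um[measurable]: "U n \<in> borel_measurable (P n)" for n
    unfolding U_def by measurable
  have Wm[measurable]: "W n k \<in> borel_measurable (P n)" for n k
    unfolding W_def by (intro borel_measurable_sum borel_measurable_times borel_measurable_const rv) auto

  have Qp: "prob_space Q" and Zm[measurable]: "Z \<in> borel_measurable Q"
    and dZ: "distr Q borel (\<lambda>w. d \<bullet> Z w) = gauss_law 0 v"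
    using mv unfolding mvnormal_def v_def by auto
  have v0: "0 \<le> v" unfolding v_def by (rule quad_nonneg[OF Sigma_pd])
  have Lm[measurable]: "L \<in> borel_measurable Q" unfolding L_def by measurable
  have charL: "char (distr Q borel L) t = iexp (t * (ln (f \<beta>1 / f \<beta>0) - 1/2 * v)) * complex_of_real (exp (- (v * t^2 / 2)))" for t
  proof -
    have "L = (\<lambda>w. (ln (f \<beta>1 / f \<beta>0) - 1/2 * v) + d \<bullet> Z w)" unfolding L_def v_def ..
    then have "char (distr Q borel L) t = iexp (t * (ln (f \<beta>1 / f \<beta>0) - 1/2 * v)) * char (distr Q borel (\<lambda>w. d \<bullet> Z w)) t"
      by (simp only: char_shift[of "\<lambda>w. d \<bullet> Z w"] Zm borel_measurable_inner borel_measurable_const)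
    then show ?thesis using dZ char_gauss[OF v0] by simp
  qed
  have qeq: "q n = d \<bullet> (((1 / real n) *\<^sub>R gram (x n) n) *v d)" for n
  proof -
    have "q n = (\<Sum>i<n. (x n i \<bullet> d)^2 / real n)"
      unfolding q_def c_def by (simp add: power_divide)
    also have "\<dots> = (1 / real n) * (\<Sum>i<n. (x n i \<bullet> d)^2)"
      by (simp add: sum_divide_distrib)
    also have "\<dots> = d \<bullet> (((1 / real n) *\<^sub>R gram (x n) n) *v d)"
      by (simp only: quad_scale quad_gram)
    finally show ?thesis .
  qed
  have qlim: "q \<longlonglongrightarrow> v"
    unfolding qeq[abs_def] v_def by (rule quad_tendsto[OF design_iv])
  have cmax: "\<forall>\<^sub>F n in sequentially. \<forall>i<n. \<bar>c n i\<bar> \<le> e" if e: "e > 0" for e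
  proof -
    have "e / (norm d + 1) > 0" using e by (simp add: add_nonneg_pos)
    then have "\<forall>\<^sub>F n in sequentially. (MAX i\<in>{..<n}. norm (x n i)) / sqrt (real n) < e / (norm d + 1)"
      by (rule order_tendstoD(2)[OF design_ii])
    then show ?thesis
    proof eventually_elim
      case (elim n)
      show ?case
      proof (intro allI impI)
        fix i assume i: "i < n"
        have mx: "norm (x n i) \<le> (MAX i\<in>{..<n}. norm (x n i))"
          using i by (intro Max_ge) auto
        have "\<bar>c n i\<bar> = \<bar>x n i \<bullet> d\<bar> / sqrt (real n)" unfolding c_def by (simp add: abs_divide)
        also have "\<dots> \<le> (norm (x n i) * norm d) / sqrt (real n)"
          by (intro divide_right_mono Cauchy_Schwarz_ineq2) auto
        also have "\<dots> \<le> ((MAX i\<in>{..<n}. norm (x n i)) * norm d) / sqrt (real n)"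
          by (intro divide_right_mono mult_right_mono mx) auto
        also have "\<dots> = ((MAX i\<in>{..<n}. norm (x n i)) / sqrt (real n)) * norm d" by simp
        also have "\<dots> \<le> (e / (norm d + 1)) * norm d"
          using elim by (intro mult_right_mono) auto
        also have "\<dots> \<le> e"
        proof -
          have p: "0 < norm d + 1" by (simp add: add_nonneg_pos)
          have "e * norm d \<le> e * (norm d + 1)" using e by (intro mult_left_mono) auto
          then have "(e * norm d) / (norm d + 1) \<le> e" by (simp add: pos_divide_le_eq[OF p])
          then show ?thesis by simp
        qed
        finally show "\<bar>c n i\<bar> \<le> e" .
      qed
    qed
  qed
  have clt: "(\<lambda>n. \<Prod>i<n. char (distr (P n) borel (eps n i)) (c n i * t))
           \<longlonglongrightarrow> complex_of_real (exp (- (v * t^2 / 2)))" for t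
    by (rule weighted_clt[OF prob indep mean0 var1 int4 mom4 qlim[unfolded q_def] cmax])
  have charS: "char (distr (P n) borel (S n)) t = (\<Prod>i<n. char (distr (P n) borel (eps n i)) (c n i * t))" for n t
  proof -
    have ind': "prob_space.indep_vars (P n) (\<lambda>_. borel) (\<lambda>i w. c n i * eps n i w) {..<n}"
      by (rule prob_space.indep_vars_compose2[OF prob indep]) auto
    have "char (distr (P n) borel (S n)) t = (\<Prod>i<n. char (distr (P n) borel (\<lambda>w. c n i * eps n i w)) t)"
      unfolding S_def by (rule prob_space.char_distr_sum[OF prob ind'])
    also have "\<dots> = (\<Prod>i<n. char (distr (P n) borel (eps n i)) (c n i * t))"
      by (intro prod.cong refl char_scale rv) auto
    finally show ?thesis .
  qed
  have Ulim: "(\<lambda>n. char (distr (P n) borel (U n)) t) \<longlonglongrightarrow>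
      iexp (t * (ln (f \<beta>1 / f \<beta>0) - 1/2 * v)) * complex_of_real (exp (- (v * t^2 / 2)))" for t
  proof -
    have "char (distr (P n) borel (U n)) t = iexp (t * (ln (f \<beta>1 / f \<beta>0) - q n / 2)) *
        (\<Prod>i<n. char (distr (P n) borel (eps n i)) (c n i * t))" for n
      unfolding U_def charS[symmetric] by (rule char_shift) simp
    moreover have "(\<lambda>n. iexp (t * (ln (f \<beta>1 / f \<beta>0) - q n / 2)) *
        (\<Prod>i<n. char (distr (P n) borel (eps n i)) (c n i * t))) \<longlonglongrightarrow>
        iexp (t * (ln (f \<beta>1 / f \<beta>0) - 1/2 * v)) * complex_of_real (exp (- (v * t^2 / 2)))"
    proof (intro tendsto_mult clt)
      have tl: "(\<lambda>n. t * (ln (f \<beta>1 / f \<beta>0) - q n / 2)) \<longlonglongrightarrow> t * (ln (f \<beta>1 / f \<beta>0) - v / 2)"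
        by (intro tendsto_intros qlim) auto
      show "(\<lambda>n. iexp (t * (ln (f \<beta>1 / f \<beta>0) - q n / 2))) \<longlonglongrightarrow> iexp (t * (ln (f \<beta>1 / f \<beta>0) - 1/2 * v))"
        using isCont_tendsto_compose[OF isCont_iexp tl] by simp
    qed
    ultimately show ?thesis by simp
  qed
  have fint: "integrable lborel f"
  proof (rule integrableI_nonneg)
    show "f \<in> borel_measurable lborel" by simp
    show "AE b in lborel. 0 \<le> f b" using f_pos by (simp add: less_imp_le)
    show "(\<integral>\<^sup>+ b. ennreal (f b) \<partial>lborel) < \<infinity>" using f_dens by simp
  qed
  have lnc: "\<exists>\<delta>>0. \<forall>b. dist b a < \<delta> \<longrightarrow> \<bar>ln (f b) - ln (f a)\<bar> \<le> \<eta>" if eta: "\<eta> > 0" for a \<eta>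
  proof -
    have "isCont f a" using f_cont by (simp add: continuous_on_eq_continuous_at)
    then have "isCont (\<lambda>b. ln (f b)) a" using f_pos[of a] by (intro isCont_ln') auto
    then obtain s where s: "s > 0" "\<And>b. b \<noteq> a \<and> dist b a < s \<Longrightarrow> dist (ln (f b)) (ln (f a)) < \<eta>"
      using metric_LIM_D[of "\<lambda>b. ln (f b)" "ln (f a)" a \<eta>] eta unfolding isCont_def by blast
    show ?thesis
    proof (intro exI[of _ s] conjI allI impI)
      fix b assume "dist b a < s"
      then show "\<bar>ln (f b) - ln (f a)\<bar> \<le> \<eta>"
        using s(2)[of b] eta by (cases "b = a") (auto simp: dist_real_def)
    qed (rule s(1))
  qed
  have rlim: "r \<longlonglongrightarrow> 0"
  proof -
    have "(\<lambda>n. inverse (sqrt (real n))) \<longlonglongrightarrow> 0"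
      by (intro tendsto_inverse_0_at_top filterlim_compose[OF sqrt_at_top filterlim_real_sequentially])
    then have "(\<lambda>n. C * inverse (sqrt (real n))) \<longlonglongrightarrow> C * 0" by (intro tendsto_intros)
    then show ?thesis unfolding r_def by (simp add: divide_inverse)
  qed
  have path: "\<forall>\<^sub>F n in sequentially. \<forall>w. \<bar>T n w - U n w\<bar> \<le> 2 * (\<eta> + r n * (K * (norm d + r n / 2) + (\<Sum>k\<in>UNIV. \<bar>W n k w\<bar>)))"
    if eta: "\<eta> > 0" for \<eta>
  proof -
    obtain \<delta>1 where d1: "\<delta>1 > 0" "\<And>b. dist b \<beta>1 < \<delta>1 \<Longrightarrow> \<bar>ln (f b) - ln (f \<beta>1)\<bar> \<le> \<eta>"
      using lnc[OF eta, of \<beta>1] by blast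
    obtain \<delta>0 where d0: "\<delta>0 > 0" "\<And>b. dist b \<beta>0 < \<delta>0 \<Longrightarrow> \<bar>ln (f b) - ln (f \<beta>0)\<bar> \<le> \<eta>"
      using lnc[OF eta, of \<beta>0] by blast
    have ev1: "\<forall>\<^sub>F n in sequentially. r n < min \<delta>0 \<delta>1"
      by (rule order_tendstoD(2)[OF rlim]) (use d1 d0 in simp)
    have ev2: "\<forall>\<^sub>F n in sequentially. n > 0" by (rule eventually_gt_at_top)
    show ?thesis using ev1 ev2 design_i
    proof eventually_elim
      case (elim n)
      then have n: "n > 0" and rn: "r n < \<delta>0" "r n < \<delta>1"
        and des: "\<forall>k. (\<Sum>i<n. (x n i $ k)^2) = real n" by auto
      have rpos: "r n > 0" unfolding r_def using n C_pos by simp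
      show ?case
      proof
        fix w
        define z where "z i = eps n i w" for i
        have f1: "\<bar>ln (f b) - ln (f \<beta>1)\<bar> \<le> \<eta>" if "b \<in> ball \<beta>1 (r n)" for b
          using that rn by (intro d1(2)) (simp add: dist_commute)
        have f0: "\<bar>ln (f b) - ln (f \<beta>0)\<bar> \<le> \<eta>" if "b \<in> ball \<beta>0 (r n)" for b
          using that rn by (intro d0(2)) (simp add: dist_commute)
        note pw = pathwise[OF n des fm f_pos fint rpos f1 f0, of z]
        have heq: "hfun (x n) n z (\<beta>1 - \<beta>0) = - (q n / 2) + S n w"
        proof -
          have a: "(\<Sum>i<n. (x n i \<bullet> d)^2) = real n * q n"
            unfolding q_def c_def using n by (simp add: power_divide sum_divide_distrib[symmetric])
          have b: "(\<Sum>i<n. (x n i \<bullet> d) * z i / sqrt (real n)) = S n w"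
            unfolding S_def c_def z_def by (intro sum.cong refl) simp
          show ?thesis unfolding hfun_def d_def[symmetric] a b using n by simp
        qed
        have weq: "(\<Sum>k\<in>UNIV. \<bar>\<Sum>i<n. x n i $ k * z i / sqrt (real n)\<bar>) = (\<Sum>k\<in>UNIV. \<bar>W n k w\<bar>)"
          unfolding W_def z_def by (intro sum.cong refl arg_cong[where f=abs]) simp
        have "T n w = ln (posterior f (x n) n (\<lambda>i. sqrt (real n) * (x n i \<bullet> ((1 / sqrt (real n)) *\<^sub>R \<beta>0) + z i)) (ball \<beta>1 (r n))
          / posterior f (x n) n (\<lambda>i. sqrt (real n) * (x n i \<bullet> ((1 / sqrt (real n)) *\<^sub>R \<beta>0) + z i)) (ball \<beta>0 (r n)))"
          unfolding T_def Ys_def z_def r_def ..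
        moreover have "U n w = ln (f \<beta>1 / f \<beta>0) + hfun (x n) n z (\<beta>1 - \<beta>0)"
          unfolding U_def heq by simp
        ultimately show "\<bar>T n w - U n w\<bar> \<le> 2 * (\<eta> + r n * (K * (norm d + r n / 2) + (\<Sum>k\<in>UNIV. \<bar>W n k w\<bar>)))"
          using pw unfolding weq K_def d_def by simp
      qed
    qed
  qed
  have EW: "\<forall>\<^sub>F n in sequentially. \<forall>k. integrable (P n) (\<lambda>w. \<bar>W n k w\<bar>) \<and> (\<integral>w. \<bar>W n k w\<bar> \<partial>P n) \<le> 1"
    using eventually_gt_at_top[of 0] design_i
  proof eventually_elim
    case (elim n)
    then have n: "n > 0" and des: "\<forall>k. (\<Sum>i<n. (x n i $ k)^2) = real n" by auto
    show ?case
    proof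
      fix k
      have ss: "(\<Sum>i<n. (x n i $ k / sqrt (real n))^2) = 1"
        using n des by (simp add: power_divide sum_divide_distrib[symmetric])
      have i2: "integrable (P n) (\<lambda>w. (W n k w)^2)" and e2: "(\<integral>w. (W n k w)^2 \<partial>P n) = 1"
        using prob_space.sum_sq_expect[OF prob indep mean0 var1, of n "\<lambda>i. x n i $ k / sqrt (real n)"] ss
        unfolding W_def by auto
      show "integrable (P n) (\<lambda>w. \<bar>W n k w\<bar>) \<and> (\<integral>w. \<bar>W n k w\<bar> \<partial>P n) \<le> 1"
        using prob_space.abs_expect_le[OF prob Wm i2] e2 by simp
    qed
  qed
  have diff0: "(\<lambda>n. char (distr (P n) borel (T n)) t - char (distr (P n) borel (U n)) t) \<longlonglongrightarrow> 0" for t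
  proof (rule LIMSEQ_I)
    fix \<epsilon> :: real assume eps0: "\<epsilon> > 0"
    define \<eta> where "\<eta> = \<epsilon> / (8 * (\<bar>t\<bar> + 1))"
    have eta: "\<eta> > 0" using eps0 by (simp add: \<eta>_def add_nonneg_pos)
    have "(\<lambda>n. 2 * \<bar>t\<bar> * (r n * (K * (norm d + r n / 2) + K))) \<longlonglongrightarrow> 2 * \<bar>t\<bar> * (0 * (K * (norm d + 0 / 2) + K))"
      by (intro tendsto_intros rlim) auto
    then have "(\<lambda>n. 2 * \<bar>t\<bar> * (r n * (K * (norm d + r n / 2) + K))) \<longlonglongrightarrow> 0" by simp
    then have ev3: "\<forall>\<^sub>F n in sequentially. 2 * \<bar>t\<bar> * (r n * (K * (norm d + r n / 2) + K)) < \<epsilon> / 2"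
      by (rule order_tendstoD(2)) (use eps0 in simp)
    have "\<forall>\<^sub>F n in sequentially. norm (char (distr (P n) borel (T n)) t - char (distr (P n) borel (U n)) t - 0) < \<epsilon>"
      using path[OF eta] EW ev3 eventually_gt_at_top[of 0]
    proof eventually_elim
      case (elim n)
      then have pw: "\<And>w. \<bar>T n w - U n w\<bar> \<le> 2 * (\<eta> + r n * (K * (norm d + r n / 2) + (\<Sum>k\<in>UNIV. \<bar>W n k w\<bar>)))"
        and iW: "\<And>k. integrable (P n) (\<lambda>w. \<bar>W n k w\<bar>)"
        and eW: "\<And>k. (\<integral>w. \<bar>W n k w\<bar> \<partial>P n) \<le> 1"
        and small: "2 * \<bar>t\<bar> * (r n * (K * (norm d + r n / 2) + K)) < \<epsilon> / 2"
        and n: "n > 0" by auto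
      interpret Pn: prob_space "P n" by (rule prob)
      have rpos: "r n > 0" unfolding r_def using n C_pos by simp
      define A where "A = K * (norm d + r n / 2)"
      define B where "B w = 2 * (\<eta> + r n * A) + (2 * r n) * (\<Sum>k\<in>UNIV. \<bar>W n k w\<bar>)" for w
      have iS: "integrable (P n) (\<lambda>w. \<Sum>k\<in>UNIV. \<bar>W n k w\<bar>)"
        by (intro Bochner_Integration.integrable_sum iW)
      have iB: "integrable (P n) B" unfolding B_def
        using iS by (intro Bochner_Integration.integrable_add Bochner_Integration.integrable_mult_right) auto
      have TB: "\<bar>T n w - U n w\<bar> \<le> B w" for w
        using pw[of w] unfolding B_def A_def by (simp add: algebra_simps)
      have EB: "(\<integral>w. B w \<partial>P n) = 2 * (\<eta> + r n * A) + (2 * r n) * (\<Sum>k\<in>UNIV. \<integral>w. \<bar>W n k w\<bar> \<partial>P n)"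
        unfolding B_def using iS iW
        by (simp add: Bochner_Integration.integral_add Bochner_Integration.integral_sum Pn.prob_space)
      have "(\<Sum>k\<in>UNIV. \<integral>w. \<bar>W n k w\<bar> \<partial>P n) \<le> (\<Sum>k\<in>(UNIV::'k set). 1)"
        by (intro sum_mono eW)
      then have sW: "(\<Sum>k\<in>UNIV. \<integral>w. \<bar>W n k w\<bar> \<partial>P n) \<le> K" unfolding K_def by simp
      have "cmod (char (distr (P n) borel (T n)) t - char (distr (P n) borel (U n)) t) \<le> \<bar>t\<bar> * (\<integral>w. B w \<partial>P n)"
        by (rule char_close[OF prob Tm Um iB TB])
      also have "\<dots> \<le> \<bar>t\<bar> * (2 * (\<eta> + r n * A) + (2 * r n) * K)"
        unfolding EB using sW rpos by (intro mult_left_mono add_left_mono) auto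
      also have "\<dots> = \<bar>t\<bar> * (2 * \<eta>) + 2 * \<bar>t\<bar> * (r n * (K * (norm d + r n / 2) + K))"
        unfolding A_def by (simp add: algebra_simps)
      also have "\<dots> < \<epsilon> / 2 + \<epsilon> / 2"
      proof -
        have "\<bar>t\<bar> * (2 * \<eta>) = \<epsilon> * (\<bar>t\<bar> / (4 * (\<bar>t\<bar> + 1)))"
          unfolding \<eta>_def by (simp add: field_simps)
        also have "\<dots> \<le> \<epsilon> * (1 / 4)"
          using eps0 by (intro mult_left_mono) (auto simp: field_simps)
        finally have "\<bar>t\<bar> * (2 * \<eta>) \<le> \<epsilon> / 4" by simp
        then show ?thesis using small eps0 by linarith
      qed
      finally show ?case by simp
    qed
    then show "\<exists>no. \<forall>n\<ge>no. norm (char (distr (P n) borel (T n)) t - char (distr (P n) borel (U n)) t - 0) < \<epsilon>"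
      by (simp add: eventually_sequentially)
  qed
  have conv: "(\<lambda>n. char (distr (P n) borel (T n)) t) \<longlonglongrightarrow> char (distr Q borel L) t" for t
  proof -
    have "(\<lambda>n. (char (distr (P n) borel (T n)) t - char (distr (P n) borel (U n)) t) + char (distr (P n) borel (U n)) t)
       \<longlonglongrightarrow> 0 + iexp (t * (ln (f \<beta>1 / f \<beta>0) - 1/2 * v)) * complex_of_real (exp (- (v * t^2 / 2)))"
      by (intro tendsto_add diff0 Ulim)
    then show ?thesis unfolding charL by simp
  qed
  have wc: "weak_conv_m (\<lambda>n. distr (P n) borel (T n)) (distr Q borel L)"
  proof (rule levy_continuity)
    show "real_distribution (distr (P n) borel (T n))" for n
      by (rule prob_space.real_distribution_distr[OF prob Tm])
    show "real_distribution (distr Q borel L)"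
      by (rule prob_space.real_distribution_distr[OF Qp Lm])
    show "(\<lambda>n. char (distr (P n) borel (T n)) t) \<longlonglongrightarrow> char (distr Q borel L) t" for t
      by (rule conv)
  qed
  show "let Ystar = (\<lambda>n w i. sqrt (real n) *
                   (x n i \<bullet> ((1 / sqrt (real n)) *\<^sub>R \<beta>0) + eps n i w));
         T = (\<lambda>n w. ln (posterior f (x n) n (Ystar n w) (ball \<beta>1 (C / sqrt (real n)))
                      / posterior f (x n) n (Ystar n w) (ball \<beta>0 (C / sqrt (real n)))));
         d = \<beta>1 - \<beta>0;
         L = (\<lambda>w. ln (f \<beta>1 / f \<beta>0) - 1/2 * (d \<bullet> (\<Sigma>0 *v d)) + d \<bullet> Z w)
     in (\<forall>n. T n \<in> borel_measurable (P n)) \<and>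
        weak_conv_m (\<lambda>n. distr (P n) borel (T n)) (distr Q borel L)"
    unfolding Let_def Ys_def[symmetric] d_def[symmetric] L_def[symmetric]
    using Tm[unfolded T_def] wc[unfolded T_def] by blast
qed

end
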